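(* Let $\mu_\varepsilon$ be a Borel probability measure on $\mathbb{R}$ and let $\eta$ be a finite non-negative Borel measure on $\mathbb{R}$ with $$\eta(\mathbb{R})<2\min\{(\eta*\mu_\varepsilon)(\{0\}),\,1\}.$$ Then the operator $\nu\mapsto\eta*\mu_\varepsilon*\nu$ is invertible (i.e. has a bounded linear inverse) on the Banach space $(\mathcal{M}(\mathbb{R},\mathcal{B}(\mathbb{R})),\|\cdot\|_{TV})$, and the operator $f\mapsto\big(\xi\mapsto\int_{\mathbb{R}}f(\xi-z)\,(\eta*\mu_\varepsilon)(dz)\big)$ is invertible on $(L^1(\mathbb{R}),\|\cdot\|_1)$.
   Context: $\mathcal{M}(\mathbb{R},\mathcal{B}(\mathbb{R}))$ is the space of finite signed Borel measures on $\mathbb{R}$ with total variation norm $\|\nu\|_{TV}:=|\nu|(\mathbb{R})$. Convolution of measures: $(\mu*\nu)(A):=\int\int\mathbf 1_A(x+y)\nu(dx)\mu(dy)$. *)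

theory Defs
  imports "HOL-Probability.Probability"
begin

text \<open>Finite signed Borel measures on the reals, represented as real-valued set
  functions that are countably additive on the Borel sets and (by convention)
  vanish on non-Borel sets, so that the space is a real vector space under
  pointwise operations.\<close>
definition signed_measure :: "(real set \<Rightarrow> real) \<Rightarrow> bool" where
  "signed_measure \<nu> \<longleftrightarrow>
     (\<forall>A. A \<notin> sets borel \<longrightarrow> \<nu> A = 0) \<and> \<nu> {} = 0 \<and>
     (\<forall>A :: nat \<Rightarrow> real set. range A \<subseteq> sets borel \<longrightarrow> disjoint_family A \<longrightarrow>
        (\<lambda>n. \<nu> (A n)) sums \<nu> (\<Union>n. A n))"

definition tv_norm :: "(real set \<Rightarrow> real) \<Rightarrow> real" where
  "tv_norm \<nu> = Sup {(\<Sum>i<n. \<bar>\<nu> (A i)\<bar>) | (n::nat) A.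
       (\<forall>i<n. A i \<in> sets borel) \<and> disjoint_family_on A {..<n}}"

definition conv_sm :: "real measure \<Rightarrow> (real set \<Rightarrow> real) \<Rightarrow> (real set \<Rightarrow> real)" where
  "conv_sm \<rho> \<nu> = (\<lambda>A. if A \<in> sets borel then (\<integral>y. \<nu> {x. x + y \<in> A} \<partial>\<rho>) else 0)"

definition sm_invertible :: "((real set \<Rightarrow> real) \<Rightarrow> (real set \<Rightarrow> real)) \<Rightarrow> bool" where
  "sm_invertible T \<longleftrightarrow>
     (\<forall>\<nu>. signed_measure \<nu> \<longrightarrow> signed_measure (T \<nu>)) \<and>
     (\<exists>S. (\<forall>\<nu>. signed_measure \<nu> \<longrightarrow> signed_measure (S \<nu>) \<and> T (S \<nu>) = \<nu> \<and> S (T \<nu>) = \<nu>) \<and>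
          (\<forall>\<nu> \<mu> a b. signed_measure \<nu> \<longrightarrow> signed_measure \<mu> \<longrightarrow>
               S (\<lambda>A. a * \<nu> A + b * \<mu> A) = (\<lambda>A. a * S \<nu> A + b * S \<mu> A)) \<and>
          (\<exists>C. \<forall>\<nu>. signed_measure \<nu> \<longrightarrow> tv_norm (S \<nu>) \<le> C * tv_norm \<nu>))"

definition conv_fun :: "real measure \<Rightarrow> (real \<Rightarrow> real) \<Rightarrow> (real \<Rightarrow> real)" where
  "conv_fun \<rho> f = (\<lambda>\<xi>. \<integral>z. f (\<xi> - z) \<partial>\<rho>)"

text \<open>Invertibility (bounded linear inverse) of an operator T on L^1(R), where elements
  of L^1 are represented by Lebesgue-integrable functions modulo a.e. equality.\<close>
definition L1_invertible :: "((real \<Rightarrow> real) \<Rightarrow> (real \<Rightarrow> real)) \<Rightarrow> bool" where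
  "L1_invertible T \<longleftrightarrow>
     (\<forall>f g. integrable lborel f \<longrightarrow> integrable lborel g \<longrightarrow> (AE x in lborel. f x = g x) \<longrightarrow>
         integrable lborel (T f) \<and> (AE x in lborel. T f x = T g x)) \<and>
     (\<exists>S. (\<forall>f g. integrable lborel f \<longrightarrow> integrable lborel g \<longrightarrow> (AE x in lborel. f x = g x) \<longrightarrow>
             integrable lborel (S f) \<and> (AE x in lborel. S f x = S g x)) \<and>
          (\<forall>f. integrable lborel f \<longrightarrow>
             (AE x in lborel. T (S f) x = f x) \<and> (AE x in lborel. S (T f) x = f x)) \<and>
          (\<forall>f g a b. integrable lborel f \<longrightarrow> integrable lborel g \<longrightarrow>
             (AE x in lborel. S (\<lambda>y. a * f y + b * g y) x = a * S f x + b * S g x)) \<and>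
          (\<exists>C. \<forall>f. integrable lborel f \<longrightarrow>
             (\<integral>x. \<bar>S f x\<bar> \<partial>lborel) \<le> C * (\<integral>x. \<bar>f x\<bar> \<partial>lborel)))"

end

theory Submission
  imports Defs
begin


lemma sm_zero_nb: "signed_measure \<nu> \<Longrightarrow> A \<notin> sets borel \<Longrightarrow> \<nu> A = 0"
  unfolding signed_measure_def by auto

lemma sm_empty: "signed_measure \<nu> \<Longrightarrow> \<nu> {} = 0"
  unfolding signed_measure_def by auto

lemma sm_sums: "signed_measure \<nu> \<Longrightarrow> range A \<subseteq> sets borel \<Longrightarrow> disjoint_family A \<Longrightarrow>
   (\<lambda>n. \<nu> (A n)) sums \<nu> (\<Union>n. A n)"
  unfolding signed_measure_def by auto

lemma sm_add:
  assumes "signed_measure \<nu>" "A \<in> sets borel" "B \<in> sets borel" "A \<inter> B = {}"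
  shows "\<nu> (A \<union> B) = \<nu> A + \<nu> B"
proof -
  have "(\<lambda>n. \<nu> (binaryset A B n)) sums \<nu> (\<Union>n. binaryset A B n)"
    apply (rule sm_sums[OF assms(1)])
    using assms by (auto simp: range_binaryset_eq disjoint_family_on_def binaryset_def)
  moreover have "(\<lambda>n. \<nu> (binaryset A B n)) sums (\<nu> A + \<nu> B)"
    by (rule binaryset_sums) (simp add: sm_empty[OF assms(1)])
  ultimately show ?thesis by (simp add: UN_binaryset_eq sums_unique2)
qed

lemma sm_diff:
  assumes "signed_measure \<nu>" "A \<in> sets borel" "B \<in> sets borel"
  shows "\<nu> (B - A) = \<nu> B - \<nu> (B \<inter> A)"
proof -
  have "B = (B - A) \<union> (B \<inter> A)" by auto
  then have "\<nu> B = \<nu> (B - A) + \<nu> (B \<inter> A)"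
    using sm_add[OF assms(1), of "B - A" "B \<inter> A"] assms by auto
  then show ?thesis by simp
qed

lemma sm_bounded:
  assumes sm: "signed_measure \<nu>"
  shows "\<exists>K. \<forall>B\<in>sets borel. \<bar>\<nu> B\<bar> \<le> K"
proof (rule ccontr)
  define bad where "bad X \<longleftrightarrow> X \<in> sets borel \<and> \<not> (\<exists>K. \<forall>B\<in>sets borel. B \<subseteq> X \<longrightarrow> \<bar>\<nu> B\<bar> \<le> K)" for X
  assume "\<not> ?thesis"
  then have bU: "bad UNIV" unfolding bad_def by auto
  have step: "\<exists>p. fst p \<in> sets borel \<and> snd p \<in> sets borel \<and> fst p \<inter> snd p = {} \<and>
      fst p \<union> snd p \<subseteq> X \<and> 1 \<le> \<bar>\<nu> (fst p)\<bar> \<and> bad (snd p)" if bX: "bad X" for X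
  proof -
    from bX have X: "X \<in> sets borel" unfolding bad_def by auto
    from bX obtain B where B: "B \<in> sets borel" "B \<subseteq> X" "\<bar>\<nu> B\<bar> > \<bar>\<nu> X\<bar> + 1"
      unfolding bad_def by (meson not_le)
    have XB: "X - B \<in> sets borel" using X B by auto
    have eq: "\<nu> X = \<nu> B + \<nu> (X - B)"
      using sm_add[OF sm B(1) XB] B by (simp add: Un_absorb1 Un_Diff_cancel)
    have 1: "1 \<le> \<bar>\<nu> (X - B)\<bar>" using eq B(3) by linarith
    have 2: "1 \<le> \<bar>\<nu> B\<bar>" using B(3) by linarith
    show ?thesis
    proof (cases "bad B")
      case True
      then show ?thesis using 1 B XB
        by (intro exI[of _ "(X - B, B)"]) auto
    next
      case False
      have "bad (X - B)"
      proof (rule ccontr)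
        assume nb: "\<not> bad (X - B)"
        from False B obtain K1 where K1: "\<forall>C\<in>sets borel. C \<subseteq> B \<longrightarrow> \<bar>\<nu> C\<bar> \<le> K1"
          unfolding bad_def by auto
        from nb XB obtain K2 where K2: "\<forall>C\<in>sets borel. C \<subseteq> X - B \<longrightarrow> \<bar>\<nu> C\<bar> \<le> K2"
          unfolding bad_def by auto
        have "\<bar>\<nu> C\<bar> \<le> K1 + K2" if C: "C \<in> sets borel" "C \<subseteq> X" for C
        proof -
          have "C = (C \<inter> B) \<union> (C - B)" by auto
          then have "\<nu> C = \<nu> (C \<inter> B) + \<nu> (C - B)"
            using sm_add[OF sm, of "C \<inter> B" "C - B"] C B by auto
          moreover have "\<bar>\<nu> (C \<inter> B)\<bar> \<le> K1" using K1 C B by auto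
          moreover have "\<bar>\<nu> (C - B)\<bar> \<le> K2"
          proof -
            have "C - B \<in> sets borel" using C B by auto
            moreover have "C - B \<subseteq> X - B" using C by blast
            ultimately show ?thesis using K2 by blast
          qed
          ultimately show ?thesis by linarith
        qed
        then show False using bX unfolding bad_def by auto
      qed
      then show ?thesis using 2 B XB
        by (intro exI[of _ "(B, X - B)"]) auto
    qed
  qed
  define P where "P X p \<longleftrightarrow> fst p \<in> sets borel \<and> snd p \<in> sets borel \<and> fst p \<inter> snd p = {} \<and>
      fst p \<union> snd p \<subseteq> X \<and> 1 \<le> \<bar>\<nu> (fst p)\<bar> \<and> bad (snd p)" for X p
  define st where "st X = (SOME p. P X p)" for X
  have st: "fst (st X) \<in> sets borel \<and> snd (st X) \<in> sets borel \<and> fst (st X) \<inter> snd (st X) = {} \<and>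
      fst (st X) \<union> snd (st X) \<subseteq> X \<and> 1 \<le> \<bar>\<nu> (fst (st X))\<bar> \<and> bad (snd (st X))" if "bad X" for X
    using someI_ex[of "P X"] step[OF that] unfolding st_def P_def by blast
  define X where "X n = ((snd \<circ> st) ^^ n) UNIV" for n
  define D where "D n = fst (st (X n))" for n
  have XS: "X (Suc n) = snd (st (X n))" for n by (simp add: X_def)
  have bX: "bad (X n)" for n
    by (induction n) (auto simp: XS bU st X_def)
  have Dp: "D n \<in> sets borel" "1 \<le> \<bar>\<nu> (D n)\<bar>" "D n \<subseteq> X n" "D n \<inter> X (Suc n) = {}" for n
    using st[OF bX[of n]] by (auto simp: D_def XS)
  have Xmono: "X (m + k) \<subseteq> X m" for m k
  proof (induction k)
    case (Suc k) then show ?case using st[OF bX[of "m + k"]] by (auto simp: XS)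
  qed simp
  have "disjoint_family D"
    unfolding disjoint_family_on_def
  proof (intro ballI impI)
    fix m n :: nat assume "m \<noteq> n"
    have *: "D m \<inter> D n = {}" if "m < n" for m n
    proof -
      have "D n \<subseteq> X (Suc m + (n - Suc m))" using Dp(3)[of n] that by simp
      then have "D n \<subseteq> X (Suc m)" using Xmono by blast
      then show ?thesis using Dp(4)[of m] by auto
    qed
    show "D m \<inter> D n = {}"
      using `m \<noteq> n` *[of m n] *[of n m] by (cases "m < n") auto
  qed
  then have "(\<lambda>n. \<nu> (D n)) sums \<nu> (\<Union>n. D n)"
    using sm_sums[OF sm] Dp(1) by auto
  then have "(\<lambda>n. \<nu> (D n)) \<longlonglongrightarrow> 0"
    using summable_LIMSEQ_zero sums_summable by blast
  then have "(\<lambda>n. \<bar>\<nu> (D n)\<bar>) \<longlonglongrightarrow> 0"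
    using tendsto_rabs_zero by blast
  then have "eventually (\<lambda>n. \<bar>\<nu> (D n)\<bar> < 1) sequentially"
    by (rule order_tendstoD) simp
  then obtain n where "\<bar>\<nu> (D n)\<bar> < 1" by (auto simp: eventually_sequentially)
  then show False using Dp(2)[of n] by simp
qed


definition pos :: "(real set \<Rightarrow> real) \<Rightarrow> real set \<Rightarrow> real" where
  "pos \<nu> A = Sup {\<nu> B | B. B \<in> sets borel \<and> B \<subseteq> A}"

lemma pos_upper:
  assumes sm: "signed_measure \<nu>" and B: "B \<in> sets borel" "B \<subseteq> A"
  shows "\<nu> B \<le> pos \<nu> A"
proof -
  obtain K where K: "\<forall>B\<in>sets borel. \<bar>\<nu> B\<bar> \<le> K" using sm_bounded[OF sm] by auto
  have "bdd_above {\<nu> B | B. B \<in> sets borel \<and> B \<subseteq> A}"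
    using K by (auto intro!: bdd_aboveI[of _ K] dest: abs_le_D1)
  then show ?thesis unfolding pos_def using B by (auto intro!: cSup_upper)
qed

lemma pos_least:
  assumes "\<And>B. B \<in> sets borel \<Longrightarrow> B \<subseteq> A \<Longrightarrow> \<nu> B \<le> c"
  shows "pos \<nu> A \<le> c"
  unfolding pos_def using assms by (auto intro!: cSup_least)

lemma pos_nonneg: "signed_measure \<nu> \<Longrightarrow> 0 \<le> pos \<nu> A"
  using pos_upper[of \<nu> "{}" A] sm_empty[of \<nu>] by auto

lemma pos_ge: "signed_measure \<nu> \<Longrightarrow> A \<in> sets borel \<Longrightarrow> \<nu> A \<le> pos \<nu> A"
  using pos_upper[of \<nu> A A] by auto

lemma pos_empty: "signed_measure \<nu> \<Longrightarrow> pos \<nu> {} = 0"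
  using pos_nonneg[of \<nu> "{}"] pos_least[of "{}" \<nu> 0] sm_empty[of \<nu>] by force

lemma pos_add:
  assumes sm: "signed_measure \<nu>" and A: "A \<in> sets borel" "A' \<in> sets borel" "A \<inter> A' = {}"
  shows "pos \<nu> (A \<union> A') = pos \<nu> A + pos \<nu> A'"
proof (rule antisym)
  show "pos \<nu> (A \<union> A') \<le> pos \<nu> A + pos \<nu> A'"
  proof (rule pos_least)
    fix B assume B: "B \<in> sets borel" "B \<subseteq> A \<union> A'"
    have "B = (B \<inter> A) \<union> (B \<inter> A')" using B by auto
    then have "\<nu> B = \<nu> (B \<inter> A) + \<nu> (B \<inter> A')"
      using sm_add[OF sm, of "B \<inter> A" "B \<inter> A'"] A B by auto
    moreover have "\<nu> (B \<inter> A) \<le> pos \<nu> A" using A B by (intro pos_upper[OF sm]) auto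
    moreover have "\<nu> (B \<inter> A') \<le> pos \<nu> A'" using A B by (intro pos_upper[OF sm]) auto
    ultimately show "\<nu> B \<le> pos \<nu> A + pos \<nu> A'" by linarith
  qed
next
  have "\<nu> B' \<le> pos \<nu> (A \<union> A') - pos \<nu> A" if B': "B' \<in> sets borel" "B' \<subseteq> A'" for B'
  proof -
    have "pos \<nu> A \<le> pos \<nu> (A \<union> A') - \<nu> B'"
    proof (rule pos_least)
      fix B assume B: "B \<in> sets borel" "B \<subseteq> A"
      have "B \<inter> B' = {}" using A B B' by auto
      then have "\<nu> (B \<union> B') = \<nu> B + \<nu> B'" using sm_add[OF sm] B B' by auto
      moreover have "\<nu> (B \<union> B') \<le> pos \<nu> (A \<union> A')"
        using B B' by (intro pos_upper[OF sm]) auto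
      ultimately show "\<nu> B \<le> pos \<nu> (A \<union> A') - \<nu> B'" by linarith
    qed
    then show ?thesis by linarith
  qed
  then have "pos \<nu> A' \<le> pos \<nu> (A \<union> A') - pos \<nu> A" by (rule pos_least)
  then show "pos \<nu> A + pos \<nu> A' \<le> pos \<nu> (A \<union> A')" by linarith
qed

lemma pos_mono: "signed_measure \<nu> \<Longrightarrow> A \<subseteq> A' \<Longrightarrow> pos \<nu> A \<le> pos \<nu> A'"
  by (rule pos_least) (auto intro: pos_upper)

lemma pos_sums:
  assumes sm: "signed_measure \<nu>" and A: "range A \<subseteq> sets borel" "disjoint_family A"
  shows "(\<lambda>n. pos \<nu> (A n)) sums pos \<nu> (\<Union>n. A n)"
proof -
  have fin: "(\<Sum>i<n. pos \<nu> (A i)) = pos \<nu> (\<Union>i<n. A i)" for n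
  proof (induction n)
    case 0 then show ?case using pos_empty[OF sm] by simp
  next
    case (Suc n)
    have "(\<Union>i<Suc n. A i) = (\<Union>i<n. A i) \<union> A n" by (auto simp: lessThan_Suc)
    moreover have "(\<Union>i<n. A i) \<inter> A n = {}"
    proof -
      { fix x i assume "x \<in> A i" "x \<in> A n" "i < n"
        then have "i \<noteq> n" by simp
        then have "A i \<inter> A n = {}" using A(2) unfolding disjoint_family_on_def by blast
        then have False using \<open>x \<in> A i\<close> \<open>x \<in> A n\<close> by blast }
      then show ?thesis by blast
    qed
    moreover have "(\<Union>i<n. A i) \<in> sets borel" using A(1) by auto
    ultimately show ?case using Suc pos_add[OF sm, of "\<Union>i<n. A i" "A n"] A(1) by auto
  qed
  have le: "(\<Sum>i<n. pos \<nu> (A i)) \<le> pos \<nu> (\<Union>n. A n)" for n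
    unfolding fin by (rule pos_mono[OF sm]) auto
  have summ: "summable (\<lambda>n. pos \<nu> (A n))"
    using le pos_nonneg[OF sm] by (intro summableI_nonneg_bounded) auto
  have "suminf (\<lambda>n. pos \<nu> (A n)) \<le> pos \<nu> (\<Union>n. A n)"
    using summ le by (intro suminf_le_const) auto
  moreover have "pos \<nu> (\<Union>n. A n) \<le> suminf (\<lambda>n. pos \<nu> (A n))"
  proof (rule pos_least)
    fix B assume B: "B \<in> sets borel" "B \<subseteq> (\<Union>n. A n)"
    have "(\<lambda>n. \<nu> (B \<inter> A n)) sums \<nu> (\<Union>n. B \<inter> A n)"
      using A B by (intro sm_sums[OF sm]) (auto simp: disjoint_family_on_def)
    moreover have "(\<Union>n. B \<inter> A n) = B" using B by auto
    ultimately have s: "(\<lambda>n. \<nu> (B \<inter> A n)) sums \<nu> B" by simp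
    have "\<nu> (B \<inter> A n) \<le> pos \<nu> (A n)" for n
      using A B by (intro pos_upper[OF sm]) auto
    then show "\<nu> B \<le> suminf (\<lambda>n. pos \<nu> (A n))"
      using s summ by (metis sums_unique suminf_le sums_summable)
  qed
  ultimately have "suminf (\<lambda>n. pos \<nu> (A n)) = pos \<nu> (\<Union>n. A n)" by (rule antisym)
  with summ show ?thesis by (metis summable_sums)
qed

lemma mk_fin_measure:
  fixes G :: "real set \<Rightarrow> real"
  assumes nn: "\<And>A. A \<in> sets borel \<Longrightarrow> 0 \<le> G A" and e: "G {} = 0"
    and ca: "\<And>A. range A \<subseteq> sets borel \<Longrightarrow> disjoint_family A \<Longrightarrow> (\<lambda>n. G (A n)) sums G (\<Union>n. A n)"
  shows "\<exists>M. sets M = sets borel \<and> finite_measure M \<and> (\<forall>A\<in>sets borel. measure M A = G A)"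
proof -
  define M where "M = measure_of UNIV (sets borel) (\<lambda>A. ennreal (G A))"
  have sa: "sigma_algebra UNIV (sets borel)"
    using sets.sigma_algebra_axioms[of borel] by simp
  have pos: "positive (sets borel) (\<lambda>A. ennreal (G A))"
    unfolding positive_def using e by simp
  have cadd: "countably_additive (sets borel) (\<lambda>A. ennreal (G A))"
    unfolding countably_additive_def
  proof (intro allI impI)
    fix A :: "nat \<Rightarrow> real set" assume A: "range A \<subseteq> sets borel" "disjoint_family A"
      "(\<Union>i. A i) \<in> sets borel"
    have s: "(\<lambda>n. G (A n)) sums G (\<Union>n. A n)" using ca A by auto
    have "(\<Sum>n. ennreal (G (A n))) = ennreal (\<Sum>n. G (A n))"
      using s A nn by (intro suminf_ennreal2) (auto simp: sums_summable)
    then show "(\<Sum>n. ennreal (G (A n))) = ennreal (G (\<Union>i. A i))"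
      using s by (simp add: sums_unique[symmetric])
  qed
  have em: "emeasure M A = ennreal (G A)" if "A \<in> sets borel" for A
    unfolding M_def by (rule emeasure_measure_of_sigma[OF sa pos cadd that])
  have sM: "sets M = sets borel" unfolding M_def using sets.sigma_sets_eq[of borel] by simp
  have "finite_measure M"
  proof (rule finite_measureI)
    have "space M = UNIV" unfolding M_def by simp
    then show "emeasure M (space M) \<noteq> \<infinity>" using em[of UNIV] by simp
  qed
  moreover have "measure M A = G A" if "A \<in> sets borel" for A
    using em[OF that] nn[OF that] by (simp add: measure_def)
  ultimately show ?thesis using sM by blast
qed

lemma jordan:
  assumes sm: "signed_measure \<nu>"
  shows "\<exists>P N. sets P = sets borel \<and> finite_measure P \<and> sets N = sets borel \<and> finite_measure N \<and>
     (\<forall>A\<in>sets borel. \<nu> A = measure P A - measure N A)"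
proof -
  obtain P where P: "sets P = sets borel" "finite_measure P" "\<forall>A\<in>sets borel. measure P A = pos \<nu> A"
    using mk_fin_measure[of "pos \<nu>"] pos_nonneg[OF sm] pos_empty[OF sm] pos_sums[OF sm] by blast
  obtain N where N: "sets N = sets borel" "finite_measure N" "\<forall>A\<in>sets borel. measure N A = pos \<nu> A - \<nu> A"
    using mk_fin_measure[of "\<lambda>A. pos \<nu> A - \<nu> A"] pos_ge[OF sm] pos_empty[OF sm] sm_empty[OF sm]
      sums_diff[OF pos_sums[OF sm] sm_sums[OF sm]] by force
  show ?thesis using P N by (intro exI[of _ P] exI[of _ N]) auto
qed

lemma sm_of_diff:
  assumes "finite_measure P" "sets P = sets borel" "finite_measure N" "sets N = sets borel"
  shows "signed_measure (\<lambda>A. if A \<in> sets borel then measure P A - measure N A else 0)"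
  unfolding signed_measure_def
proof (intro conjI allI impI)
  fix A :: "nat \<Rightarrow> real set" assume A: "range A \<subseteq> sets borel" "disjoint_family A"
  have "(\<lambda>n. measure P (A n)) sums measure P (\<Union>n. A n)"
    using A assms by (intro finite_measure.finite_measure_UNION) auto
  moreover have "(\<lambda>n. measure N (A n)) sums measure N (\<Union>n. A n)"
    using A assms by (intro finite_measure.finite_measure_UNION) auto
  ultimately show "(\<lambda>n. if A n \<in> sets borel then measure P (A n) - measure N (A n) else 0) sums
      (if (\<Union>n. A n) \<in> sets borel then measure P (\<Union>n. A n) - measure N (\<Union>n. A n) else 0)"
    using A by (auto intro: sums_diff)
qed auto

lemma sm_lin:
  assumes "signed_measure \<nu>" "signed_measure \<mu>"
  shows "signed_measure (\<lambda>A. a * \<nu> A + b * \<mu> A)"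
  using assms unfolding signed_measure_def
  by (auto intro!: sums_add sums_mult)

lemma tv_set_bdd:
  assumes sm: "signed_measure \<nu>"
  shows "\<exists>K. \<forall>(n::nat) A. (\<forall>i<n. A i \<in> sets borel) \<longrightarrow> disjoint_family_on A {..<n} \<longrightarrow>
     (\<Sum>i<n. \<bar>\<nu> (A i)\<bar>) \<le> K"
proof -
  obtain P N where PN: "sets P = sets borel" "finite_measure P" "sets N = sets borel" "finite_measure N"
     "\<forall>A\<in>sets borel. \<nu> A = measure P A - measure N A"
    using jordan[OF sm] by blast
  interpret P: finite_measure P by fact
  interpret N: finite_measure N by fact
  show ?thesis
  proof (intro exI[of _ "measure P UNIV + measure N UNIV"] allI impI)
    fix n and A :: "nat \<Rightarrow> real set"
    assume A: "\<forall>i<n. A i \<in> sets borel" "disjoint_family_on A {..<n}"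
    have "(\<Sum>i<n. \<bar>\<nu> (A i)\<bar>) \<le> (\<Sum>i<n. measure P (A i) + measure N (A i))"
    proof (intro sum_mono)
      fix i assume "i \<in> {..<n}"
      then show "\<bar>\<nu> (A i)\<bar> \<le> measure P (A i) + measure N (A i)"
      proof -
        have e: "\<nu> (A i) = measure P (A i) - measure N (A i)" using A PN(5) \<open>i \<in> {..<n}\<close> by auto
        show ?thesis unfolding e abs_le_iff using measure_nonneg[of P "A i"] measure_nonneg[of N "A i"] by linarith
      qed
    qed
    also have "\<dots> = measure P (\<Union>i<n. A i) + measure N (\<Union>i<n. A i)"
      using A PN by (simp add: sum.distrib P.finite_measure_finite_Union N.finite_measure_finite_Union image_subset_iff)
    also have "\<dots> \<le> measure P UNIV + measure N UNIV"
      using PN by (intro add_mono P.finite_measure_mono N.finite_measure_mono) auto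
    finally show "(\<Sum>i<n. \<bar>\<nu> (A i)\<bar>) \<le> measure P UNIV + measure N UNIV" .
  qed
qed

lemma tv_upper:
  fixes n :: nat
  assumes sm: "signed_measure \<nu>" and A: "\<forall>i<n. A i \<in> sets borel" "disjoint_family_on A {..<n}"
  shows "(\<Sum>i<n. \<bar>\<nu> (A i)\<bar>) \<le> tv_norm \<nu>"
proof -
  obtain K where K: "\<forall>(n::nat) A. (\<forall>i<n. A i \<in> sets borel) \<longrightarrow> disjoint_family_on A {..<n} \<longrightarrow>
     (\<Sum>i<n. \<bar>\<nu> (A i)\<bar>) \<le> K" using tv_set_bdd[OF sm] by blast
  show ?thesis unfolding tv_norm_def
    apply (rule cSup_upper)
    subgoal by (rule CollectI, rule exI[where x=n], rule exI[where x=A]) (use A in simp)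
    subgoal using K by (intro bdd_aboveI[of _ K]) blast
    done
qed

lemma tv_least:
  assumes "\<And>(n::nat) A. \<forall>i<n. A i \<in> sets borel \<Longrightarrow> disjoint_family_on A {..<n} \<Longrightarrow> (\<Sum>i<n. \<bar>\<nu> (A i)\<bar>) \<le> C"
  shows "tv_norm \<nu> \<le> C"
  unfolding tv_norm_def
  apply (rule cSup_least)
  subgoal by (rule ex_in_conv[THEN iffD1], rule exI[where x=0], rule CollectI, rule exI[where x="0::nat"],
     rule exI[where x="\<lambda>_. {}"]) (simp add: disjoint_family_on_def)
  subgoal using assms by blast
  done


lemma tv_nonneg: assumes sm: "signed_measure \<nu>" shows "0 \<le> tv_norm \<nu>"
proof -
  have "(\<Sum>i<(0::nat). \<bar>\<nu> ((\<lambda>_. {}) i)\<bar>) \<le> tv_norm \<nu>"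
    by (rule tv_upper[OF sm]) (auto simp: disjoint_family_on_def)
  then show ?thesis by simp
qed

lemma tv_abs: 
  assumes sm: "signed_measure \<nu>" shows "\<bar>\<nu> B\<bar> \<le> tv_norm \<nu>"
proof (cases "B \<in> sets borel")
  case True
  have "(\<Sum>i<(1::nat). \<bar>\<nu> ((\<lambda>_. B) i)\<bar>) \<le> tv_norm \<nu>"
    by (rule tv_upper[OF sm]) (use True in \<open>auto simp: disjoint_family_on_def\<close>)
  then show ?thesis by simp
qed (use sm_zero_nb[OF sm] tv_nonneg[OF sm] in auto)

lemma tv_lin:
  assumes sm: "signed_measure \<nu>" "signed_measure \<mu>"
  shows "tv_norm (\<lambda>A. a * \<nu> A + b * \<mu> A) \<le> \<bar>a\<bar> * tv_norm \<nu> + \<bar>b\<bar> * tv_norm \<mu>"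
proof (rule tv_least)
  fix n and A :: "nat \<Rightarrow> real set" assume A: "\<forall>i<n. A i \<in> sets borel" "disjoint_family_on A {..<n}"
  have "(\<Sum>i<n. \<bar>a * \<nu> (A i) + b * \<mu> (A i)\<bar>) \<le> (\<Sum>i<n. \<bar>a\<bar> * \<bar>\<nu> (A i)\<bar> + \<bar>b\<bar> * \<bar>\<mu> (A i)\<bar>)"
    by (intro sum_mono) (simp add: abs_mult[symmetric] abs_triangle_ineq)
  also have "\<dots> = \<bar>a\<bar> * (\<Sum>i<n. \<bar>\<nu> (A i)\<bar>) + \<bar>b\<bar> * (\<Sum>i<n. \<bar>\<mu> (A i)\<bar>)"
    by (simp add: sum.distrib sum_distrib_left)
  also have "\<dots> \<le> \<bar>a\<bar> * tv_norm \<nu> + \<bar>b\<bar> * tv_norm \<mu>"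
    using tv_upper[OF sm(1) A] tv_upper[OF sm(2) A] by (intro add_mono mult_left_mono) auto
  finally show "(\<Sum>i<n. \<bar>a * \<nu> (A i) + b * \<mu> (A i)\<bar>) \<le> \<bar>a\<bar> * tv_norm \<nu> + \<bar>b\<bar> * tv_norm \<mu>" .
qed


lemma measure_add_nn:
  assumes s1: "sets N1 = sets M" and s2: "sets N2 = sets M"
    and e: "\<And>A. A \<in> sets M \<Longrightarrow> emeasure M A = emeasure N1 A + emeasure N2 A"
    and f: "f \<in> borel_measurable M"
  shows "(\<integral>\<^sup>+x. f x \<partial>M) = (\<integral>\<^sup>+x. f x \<partial>N1) + (\<integral>\<^sup>+x. f x \<partial>N2)"
  using f
proof (induct rule: borel_measurable_induct)
  have sp: "space N1 = space M" "space N2 = space M" using s1 s2 sets_eq_imp_space_eq by metis+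
  case (cong f g)
  have "(\<integral>\<^sup>+x. f x \<partial>M) = (\<integral>\<^sup>+x. g x \<partial>M)" "(\<integral>\<^sup>+x. f x \<partial>N1) = (\<integral>\<^sup>+x. g x \<partial>N1)"
     "(\<integral>\<^sup>+x. f x \<partial>N2) = (\<integral>\<^sup>+x. g x \<partial>N2)"
    by (intro nn_integral_cong; simp add: sp cong(3))+
  then show ?case using cong(4) by simp
next
  case (set A)
  then show ?case using e s1 s2 by simp
next
  case (mult u c)
  have m1: "u \<in> borel_measurable N1" "u \<in> borel_measurable N2"
    using mult(2) measurable_cong_sets[OF s1 refl] measurable_cong_sets[OF s2 refl] by auto
  show ?case using mult(2,4) m1 by (simp add: nn_integral_cmult distrib_left)
next
  case (add u v)
  have m1: "u \<in> borel_measurable N1" "u \<in> borel_measurable N2" "v \<in> borel_measurable N1" "v \<in> borel_measurable N2"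
    using add(1,4) measurable_cong_sets[OF s1 refl] measurable_cong_sets[OF s2 refl] by auto
  show ?case using add m1 by (simp add: nn_integral_add ac_simps)
next
  case (seq U)
  have m1a: "U i \<in> borel_measurable N1" for i
    by (subst measurable_cong_sets[OF s1 refl]) (rule seq(1))
  have m1b: "U i \<in> borel_measurable N2" for i
    by (subst measurable_cong_sets[OF s2 refl]) (rule seq(1))
  note m1 = m1a m1b
  have "(\<integral>\<^sup>+x. (SUP i. U i) x \<partial>M) = (SUP i. \<integral>\<^sup>+x. U i x \<partial>M)"
    unfolding SUP_apply by (rule nn_integral_monotone_convergence_SUP[OF seq(4) seq(1)])
  also have "\<dots> = (SUP i. (\<integral>\<^sup>+x. U i x \<partial>N1) + (\<integral>\<^sup>+x. U i x \<partial>N2))"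
    using seq(3) by simp
  also have "\<dots> = (SUP i. \<integral>\<^sup>+x. U i x \<partial>N1) + (SUP i. \<integral>\<^sup>+x. U i x \<partial>N2)"
    by (rule ennreal_SUP_add) (use seq(4) in \<open>auto intro: incseq_nn_integral\<close>)
  also have "\<dots> = (\<integral>\<^sup>+x. (SUP i. U i) x \<partial>N1) + (\<integral>\<^sup>+x. (SUP i. U i) x \<partial>N2)"
    unfolding SUP_apply
    by (simp add: nn_integral_monotone_convergence_SUP[OF seq(4) m1a] nn_integral_monotone_convergence_SUP[OF seq(4) m1b])
  finally show ?case .
qed

lemma measure_add_integral:
  fixes f :: "'a \<Rightarrow> real"
  assumes s1: "sets N1 = sets M" and s2: "sets N2 = sets M"
    and e: "\<And>A. A \<in> sets M \<Longrightarrow> emeasure M A = emeasure N1 A + emeasure N2 A"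
    and f: "integrable M f"
  shows "integrable N1 f" "integrable N2 f" "(\<integral>x. f x \<partial>M) = (\<integral>x. f x \<partial>N1) + (\<integral>x. f x \<partial>N2)"
proof -
  have fm: "f \<in> borel_measurable M" using f by auto
  have m1: "f \<in> borel_measurable N1" "f \<in> borel_measurable N2"
    using fm measurable_cong_sets[OF s1 refl] measurable_cong_sets[OF s2 refl] by auto
  have add: "(\<integral>\<^sup>+x. g x \<partial>M) = (\<integral>\<^sup>+x. g x \<partial>N1) + (\<integral>\<^sup>+x. g x \<partial>N2)" if "g \<in> borel_measurable M" for g
    using measure_add_nn[OF s1 s2 e that] by simp
  have fin: "(\<integral>\<^sup>+x. ennreal (norm (f x)) \<partial>M) < \<infinity>" using f by (simp add: integrable_iff_bounded)
  have a: "(\<integral>\<^sup>+x. ennreal (norm (f x)) \<partial>M) = (\<integral>\<^sup>+x. ennreal (norm (f x)) \<partial>N1) + (\<integral>\<^sup>+x. ennreal (norm (f x)) \<partial>N2)"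
    using fm by (intro add) auto
  show i1: "integrable N1 f" "integrable N2 f"
    using fin a m1 by (auto simp: integrable_iff_bounded top_unique)
  have p: "(\<integral>\<^sup>+x. ennreal (f x) \<partial>M) = (\<integral>\<^sup>+x. ennreal (f x) \<partial>N1) + (\<integral>\<^sup>+x. ennreal (f x) \<partial>N2)"
    using fm by (intro add) auto
  have n: "(\<integral>\<^sup>+x. ennreal (- f x) \<partial>M) = (\<integral>\<^sup>+x. ennreal (- f x) \<partial>N1) + (\<integral>\<^sup>+x. ennreal (- f x) \<partial>N2)"
    using fm by (intro add) auto
  have fin2: "(\<integral>\<^sup>+x. ennreal (f x) \<partial>N1) \<noteq> \<infinity>" "(\<integral>\<^sup>+x. ennreal (f x) \<partial>N2) \<noteq> \<infinity>"
     "(\<integral>\<^sup>+x. ennreal (- f x) \<partial>N1) \<noteq> \<infinity>" "(\<integral>\<^sup>+x. ennreal (- f x) \<partial>N2) \<noteq> \<infinity>"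
    using i1 by (auto simp: real_integrable_def)
  show "(\<integral>x. f x \<partial>M) = (\<integral>x. f x \<partial>N1) + (\<integral>x. f x \<partial>N2)"
    unfolding real_lebesgue_integral_def[OF f] real_lebesgue_integral_def[OF i1(1)]
      real_lebesgue_integral_def[OF i1(2)] p n
    using fin2 by (simp add: enn2real_plus top.not_eq_extremum)
qed

lemma trans_set_borel: "A \<in> sets borel \<Longrightarrow> {x::real. x + y \<in> A} \<in> sets borel"
proof -
  assume A: "A \<in> sets borel"
  have "(\<lambda>x::real. x + y) \<in> borel_measurable borel" by simp
  from measurable_sets[OF this A] show ?thesis by (simp add: vimage_def)
qed

lemma measure_trans_meas:
  fixes P :: "real measure"
  assumes P: "finite_measure P" "sets P = sets borel" and A: "A \<in> sets borel"
  shows "(\<lambda>y. measure P {x. x + y \<in> A}) \<in> borel_measurable borel"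
proof -
  interpret P: finite_measure P by fact
  have mf: "(\<lambda>p::real\<times>real. snd p + fst p) \<in> borel_measurable (borel \<Otimes>\<^sub>M P)"
    by (simp add: measurable_cong_sets[OF sets_pair_measure_cong[OF refl P(2)] refl])
  have Q: "(\<lambda>p. snd p + fst p) -` A \<inter> space (borel \<Otimes>\<^sub>M P) \<in> sets (borel \<Otimes>\<^sub>M P)"
    by (rule measurable_sets[OF mf A])
  have "(\<lambda>y. emeasure P (Pair y -` ((\<lambda>p. snd p + fst p) -` A \<inter> space (borel \<Otimes>\<^sub>M P)))) \<in> borel_measurable borel"
    by (rule P.measurable_emeasure_Pair[OF Q])
  moreover have "Pair y -` ((\<lambda>p. snd p + fst p) -` A \<inter> space (borel \<Otimes>\<^sub>M P)) = {x. x + y \<in> A}" for y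
    using sets_eq_imp_space_eq[OF P(2)] by (auto simp: space_pair_measure)
  ultimately have "(\<lambda>y. emeasure P {x. x + y \<in> A}) \<in> borel_measurable borel" by simp
  then show ?thesis unfolding measure_def by simp
qed

lemma sm_trans_meas:
  assumes sm: "signed_measure \<nu>" and A: "A \<in> sets borel"
  shows "(\<lambda>y. \<nu> {x. x + y \<in> A}) \<in> borel_measurable borel"
proof -
  obtain P N where PN: "sets P = sets borel" "finite_measure P" "sets N = sets borel" "finite_measure N"
     "\<forall>A\<in>sets borel. \<nu> A = measure P A - measure N A"
    using jordan[OF sm] by blast
  have "(\<lambda>y. \<nu> {x. x + y \<in> A}) = (\<lambda>y. measure P {x. x + y \<in> A} - measure N {x. x + y \<in> A})"
    using PN(5) trans_set_borel[OF A] by auto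
  moreover have "(\<lambda>y. measure P {x. x + y \<in> A} - measure N {x. x + y \<in> A}) \<in> borel_measurable borel"
    using measure_trans_meas[OF PN(2,1) A] measure_trans_meas[OF PN(4,3) A] by auto
  ultimately show ?thesis by simp
qed

lemma sm_trans_integrable:
  fixes M :: "real measure"
  assumes sm: "signed_measure \<nu>" and A: "A \<in> sets borel" and M: "finite_measure M" "sets M = sets borel"
  shows "integrable M (\<lambda>y. \<nu> {x. x + y \<in> A})"
proof -
  interpret M: finite_measure M by fact
  show ?thesis
    by (rule M.integrable_const_bound[where B="tv_norm \<nu>"])
      (use tv_abs[OF sm] sm_trans_meas[OF sm A] measurable_cong_sets[OF M(2) refl] in auto)
qed

lemma integral_convolution:
  fixes g :: "real \<Rightarrow> real"
  assumes M: "finite_measure M" "sets M = sets borel" and N: "finite_measure N" "sets N = sets borel"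
    and g: "g \<in> borel_measurable borel" and gi: "integrable (M \<star> N) g"
  shows "integrable (M \<Otimes>\<^sub>M N) (\<lambda>p. g (fst p + snd p))"
    "(\<integral>w. g w \<partial>(M \<star> N)) = (\<integral>x. (\<integral>y. g (x + y) \<partial>N) \<partial>M)"
proof -
  interpret M: finite_measure M by fact
  interpret N: finite_measure N by fact
  interpret pair_sigma_finite M N ..
  have mf: "(\<lambda>p. fst p + snd p) \<in> measurable (M \<Otimes>\<^sub>M N) borel"
    by (simp add: measurable_cong_sets[OF sets_pair_measure_cong[OF M(2) N(2)] refl])
  have eqf: "(\<lambda>(x, y). x + y) = (\<lambda>p. fst p + snd p)" by auto
  show i: "integrable (M \<Otimes>\<^sub>M N) (\<lambda>p. g (fst p + snd p))"
    using gi unfolding convolution_def eqf by (subst (asm) integrable_distr_eq[OF mf g])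
  have "(\<integral>w. g w \<partial>(M \<star> N)) = (\<integral>p. g (fst p + snd p) \<partial>(M \<Otimes>\<^sub>M N))"
    unfolding convolution_def eqf by (rule integral_distr[OF mf g])
  also have "\<dots> = (\<integral>x. (\<integral>y. g (x + y) \<partial>N) \<partial>M)"
    using integral_fst'[OF i] by simp
  finally show "(\<integral>w. g w \<partial>(M \<star> N)) = (\<integral>x. (\<integral>y. g (x + y) \<partial>N) \<partial>M)" .
qed


lemma measure_conv:
  fixes M P :: "real measure"
  assumes M: "finite_measure M" "sets M = sets borel" and P: "finite_measure P" "sets P = sets borel"
    and A: "A \<in> sets borel"
  shows "measure (M \<star> P) A = (\<integral>y. measure P {x. x + y \<in> A} \<partial>M)"
proof -
  interpret M: finite_measure M by fact
  interpret P: finite_measure P by fact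
  have spM: "space M = UNIV" using sets_eq_imp_space_eq[OF M(2)] by simp
  have spP: "space P = UNIV" using sets_eq_imp_space_eq[OF P(2)] by simp
  have meas: "(\<lambda>y. measure P {x. x + y \<in> A}) \<in> borel_measurable M"
    by (subst measurable_cong_sets[OF M(2) refl]) (rule measure_trans_meas[OF P(1,2) A])
  have int: "integrable M (\<lambda>y. measure P {x. x + y \<in> A})"
    by (rule M.integrable_const_bound[where B="measure P UNIV"])
       (use meas P.bounded_measure in \<open>auto intro!: AE_I2 simp: spP\<close>)
  have "emeasure (M \<star> P) A = (\<integral>\<^sup>+y. emeasure P {x. x + y \<in> A} \<partial>M)"
    by (rule convolution_emeasure) (use A M P spM spP in auto)
  also have "\<dots> = (\<integral>\<^sup>+y. ennreal (measure P {x. x + y \<in> A}) \<partial>M)"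
    by (simp add: P.emeasure_eq_measure)
  also have "\<dots> = ennreal (\<integral>y. measure P {x. x + y \<in> A} \<partial>M)"
    by (rule nn_integral_eq_integral[OF int]) simp
  finally show ?thesis unfolding measure_def by simp
qed

lemma conv_sm_repr:
  fixes K :: "real measure"
  assumes K: "finite_measure K" "sets K = sets borel" and sm: "signed_measure \<nu>"
  shows "\<exists>P N. finite_measure P \<and> sets P = sets borel \<and> finite_measure N \<and> sets N = sets borel \<and>
    conv_sm K \<nu> = (\<lambda>A. if A \<in> sets borel then measure P A - measure N A else 0)"
proof -
  obtain P N where PN: "sets P = sets borel" "finite_measure P" "sets N = sets borel" "finite_measure N"
     "\<forall>A\<in>sets borel. \<nu> A = measure P A - measure N A"
    using jordan[OF sm] by blast
  have "conv_sm K \<nu> A = measure (K \<star> P) A - measure (K \<star> N) A" if A: "A \<in> sets borel" for A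
  proof -
    have "conv_sm K \<nu> A = (\<integral>y. \<nu> {x. x + y \<in> A} \<partial>K)" using A by (simp add: conv_sm_def)
    also have "\<dots> = (\<integral>y. measure P {x. x + y \<in> A} - measure N {x. x + y \<in> A} \<partial>K)"
      using PN(5) trans_set_borel[OF A] by simp
    also have "\<dots> = (\<integral>y. measure P {x. x + y \<in> A} \<partial>K) - (\<integral>y. measure N {x. x + y \<in> A} \<partial>K)"
    proof (rule Bochner_Integration.integral_diff)
      interpret K: finite_measure K by fact
      show "integrable K (\<lambda>y. measure P {x. x + y \<in> A})"
        by (rule K.integrable_const_bound[where B="measure P UNIV"])
           (use measure_trans_meas[OF PN(2,1) A] measurable_cong_sets[OF K(2) refl]
             finite_measure.bounded_measure[OF PN(2)] in \<open>auto intro!: AE_I2 simp: sets_eq_imp_space_eq[OF PN(1)]\<close>)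
      show "integrable K (\<lambda>y. measure N {x. x + y \<in> A})"
        by (rule K.integrable_const_bound[where B="measure N UNIV"])
           (use measure_trans_meas[OF PN(4,3) A] measurable_cong_sets[OF K(2) refl]
             finite_measure.bounded_measure[OF PN(4)] in \<open>auto intro!: AE_I2 simp: sets_eq_imp_space_eq[OF PN(3)]\<close>)
    qed
    also have "\<dots> = measure (K \<star> P) A - measure (K \<star> N) A"
      using measure_conv[OF K PN(2,1) A] measure_conv[OF K PN(4,3) A] by simp
    finally show ?thesis .
  qed
  then have "conv_sm K \<nu> = (\<lambda>A. if A \<in> sets borel then measure (K \<star> P) A - measure (K \<star> N) A else 0)"
    by (auto simp: conv_sm_def)
  then show ?thesis using convolution_finite[OF K(1) PN(2)] convolution_finite[OF K(1) PN(4)] K PN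
    by (intro exI[where x="K \<star> P"] exI[where x="K \<star> N"]) auto
qed

lemma conv_sm_signed:
  fixes K :: "real measure"
  assumes K: "finite_measure K" "sets K = sets borel" and sm: "signed_measure \<nu>"
  shows "signed_measure (conv_sm K \<nu>)"
  using conv_sm_repr[OF K sm] sm_of_diff by metis

lemma conv_sm_tv:
  fixes K :: "real measure"
  assumes K: "finite_measure K" "sets K = sets borel" and sm: "signed_measure \<nu>"
  shows "tv_norm (conv_sm K \<nu>) \<le> measure K UNIV * tv_norm \<nu>"
proof (rule tv_least)
  interpret K: finite_measure K by fact
  have spK: "space K = UNIV" using sets_eq_imp_space_eq[OF K(2)] by simp
  fix n :: nat and A :: "nat \<Rightarrow> real set"
  assume A: "\<forall>i<n. A i \<in> sets borel" "disjoint_family_on A {..<n}"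
  have int: "integrable K (\<lambda>y. \<nu> {x. x + y \<in> A i})" if "i \<in> {..<n}" for i
    using sm_trans_integrable[OF sm _ K] A that by auto
  have "(\<Sum>i<n. \<bar>conv_sm K \<nu> (A i)\<bar>) = (\<Sum>i<n. \<bar>\<integral>y. \<nu> {x. x + y \<in> A i} \<partial>K\<bar>)"
    using A by (intro sum.cong) (auto simp: conv_sm_def)
  also have "\<dots> \<le> (\<Sum>i<n. \<integral>y. \<bar>\<nu> {x. x + y \<in> A i}\<bar> \<partial>K)"
    by (intro sum_mono integral_abs_bound)
  also have "\<dots> = (\<integral>y. (\<Sum>i<n. \<bar>\<nu> {x. x + y \<in> A i}\<bar>) \<partial>K)"
    by (rule Bochner_Integration.integral_sum[symmetric]) (use int in auto)
  also have "\<dots> \<le> (\<integral>y. tv_norm \<nu> \<partial>K)"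
  proof (rule integral_mono)
    show "integrable K (\<lambda>y. \<Sum>i<n. \<bar>\<nu> {x. x + y \<in> A i}\<bar>)" using int by auto
    show "integrable K (\<lambda>y. tv_norm \<nu>)" by simp
    fix y
    show "(\<Sum>i<n. \<bar>\<nu> {x. x + y \<in> A i}\<bar>) \<le> tv_norm \<nu>"
    proof (rule tv_upper[OF sm, of n "\<lambda>i. {x. x + y \<in> A i}"])
      show "\<forall>i<n. {x. x + y \<in> A i} \<in> sets borel" using A trans_set_borel by auto
      show "disjoint_family_on (\<lambda>i. {x. x + y \<in> A i}) {..<n}"
        using A(2) unfolding disjoint_family_on_def by blast
    qed
  qed
  also have "\<dots> = measure K UNIV * tv_norm \<nu>" by (simp add: spK)
  finally show "(\<Sum>i<n. \<bar>conv_sm K \<nu> (A i)\<bar>) \<le> measure K UNIV * tv_norm \<nu>" .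
qed

lemma conv_sm_lin:
  fixes K :: "real measure"
  assumes K: "finite_measure K" "sets K = sets borel" and sm: "signed_measure \<nu>" "signed_measure \<mu>"
  shows "conv_sm K (\<lambda>A. a * \<nu> A + b * \<mu> A) = (\<lambda>A. a * conv_sm K \<nu> A + b * conv_sm K \<mu> A)"
proof
  fix A :: "real set"
  show "conv_sm K (\<lambda>A. a * \<nu> A + b * \<mu> A) A = a * conv_sm K \<nu> A + b * conv_sm K \<mu> A"
  proof (cases "A \<in> sets borel")
    case True
    have i1: "integrable K (\<lambda>y. \<nu> {x. x + y \<in> A})" using sm_trans_integrable[OF sm(1) True K] .
    have i2: "integrable K (\<lambda>y. \<mu> {x. x + y \<in> A})" using sm_trans_integrable[OF sm(2) True K] .
    show ?thesis using True i1 i2 by (simp add: conv_sm_def)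
  qed (simp add: conv_sm_def)
qed

lemma conv_sm_assoc:
  fixes M K :: "real measure"
  assumes M: "finite_measure M" "sets M = sets borel" and K: "finite_measure K" "sets K = sets borel"
    and sm: "signed_measure \<nu>"
  shows "conv_sm M (conv_sm K \<nu>) = conv_sm (M \<star> K) \<nu>"
proof
  fix A :: "real set"
  show "conv_sm M (conv_sm K \<nu>) A = conv_sm (M \<star> K) \<nu> A"
  proof (cases "A \<in> sets borel")
    case True
    define g where "g w = \<nu> {x. x + w \<in> A}" for w
    have gm: "g \<in> borel_measurable borel" unfolding g_def by (rule sm_trans_meas[OF sm True])
    have MK: "finite_measure (M \<star> K)" "sets (M \<star> K) = sets borel"
      using convolution_finite[OF M(1) K(1) K(2) M(2)] by auto
    have gi: "integrable (M \<star> K) g" unfolding g_def by (rule sm_trans_integrable[OF sm True MK])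
    have "conv_sm M (conv_sm K \<nu>) A = (\<integral>y. conv_sm K \<nu> {x. x + y \<in> A} \<partial>M)"
      using True by (simp add: conv_sm_def)
    also have "\<dots> = (\<integral>y. (\<integral>z. g (y + z) \<partial>K) \<partial>M)"
    proof (rule Bochner_Integration.integral_cong[OF refl])
      fix y
      have "{x. x + z \<in> {x. x + y \<in> A}} = {x. x + (y + z) \<in> A}" for z
        by (auto simp: ac_simps)
      then show "conv_sm K \<nu> {x. x + y \<in> A} = (\<integral>z. g (y + z) \<partial>K)"
        using trans_set_borel[OF True] by (simp add: conv_sm_def g_def)
    qed
    also have "\<dots> = (\<integral>w. g w \<partial>(M \<star> K))"
      by (rule integral_convolution(2)[OF M K gm gi, symmetric])
    also have "\<dots> = conv_sm (M \<star> K) \<nu> A" using True by (simp add: conv_sm_def g_def)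
    finally show ?thesis .
  qed (simp add: conv_sm_def)
qed

lemma conv_sm_return:
  assumes sm: "signed_measure \<nu>"
  shows "conv_sm (return borel 0) \<nu> = \<nu>"
proof
  fix A :: "real set"
  show "conv_sm (return borel 0) \<nu> A = \<nu> A"
  proof (cases "A \<in> sets borel")
    case True
    then show ?thesis
      by (simp add: conv_sm_def integral_return[OF _ sm_trans_meas[OF sm True]])
  qed (simp add: conv_sm_def sm_zero_nb[OF sm])
qed

lemma conv_sm_add_measure:
  fixes M N1 N2 :: "real measure"
  assumes M: "finite_measure M" "sets M = sets borel" and s: "sets N1 = sets borel" "sets N2 = sets borel"
    and e: "\<And>A. A \<in> sets borel \<Longrightarrow> emeasure M A = emeasure N1 A + emeasure N2 A"
    and sm: "signed_measure \<nu>"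
  shows "conv_sm M \<nu> A = conv_sm N1 \<nu> A + conv_sm N2 \<nu> A"
proof (cases "A \<in> sets borel")
  case True
  have i: "integrable M (\<lambda>y. \<nu> {x. x + y \<in> A})" by (rule sm_trans_integrable[OF sm True M])
  have "(\<integral>y. \<nu> {x. x + y \<in> A} \<partial>M) = (\<integral>y. \<nu> {x. x + y \<in> A} \<partial>N1) + (\<integral>y. \<nu> {x. x + y \<in> A} \<partial>N2)"
    by (rule measure_add_integral(3)) (use s M(2) e i in auto)
  then show ?thesis using True by (simp add: conv_sm_def)
qed (simp add: conv_sm_def)


lemma meas_shift: "f \<in> borel_measurable borel \<Longrightarrow> (\<lambda>z. f (x - z :: real)) \<in> borel_measurable borel"
  by (rule measurable_compose[OF _ , of "\<lambda>z. x - z" borel borel f borel]) simp_all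

lemma meas_prod_shift:
  fixes K :: "real measure" and h :: "real \<Rightarrow> 'b::topological_space"
  assumes K: "sets K = sets borel" and h: "h \<in> borel_measurable borel"
  shows "(\<lambda>p. h (fst p - snd p)) \<in> borel_measurable (lborel \<Otimes>\<^sub>M K)"
proof -
  have "(\<lambda>p::real\<times>real. h (fst p - snd p)) \<in> borel_measurable (borel \<Otimes>\<^sub>M borel)"
    by (rule measurable_compose[OF borel_measurable_diff[OF measurable_fst measurable_snd] h])
  then show ?thesis
    by (subst measurable_cong_sets[OF sets_pair_measure_cong[OF sets_lborel K] refl])
qed

lemma conv_nn:
  fixes K :: "real measure" and h :: "real \<Rightarrow> ennreal"
  assumes K: "finite_measure K" "sets K = sets borel" and h: "h \<in> borel_measurable borel"
  shows "(\<integral>\<^sup>+x. (\<integral>\<^sup>+z. h (x - z) \<partial>K) \<partial>lborel) = emeasure K UNIV * (\<integral>\<^sup>+x. h x \<partial>lborel)"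
proof -
  interpret K: finite_measure K by fact
  interpret pair_sigma_finite lborel K ..
  have spK: "space K = UNIV" using sets_eq_imp_space_eq[OF K(2)] by simp
  have meas: "(\<lambda>p. h (fst p - snd p)) \<in> borel_measurable (lborel \<Otimes>\<^sub>M K)"
    by (rule meas_prod_shift[OF K(2) h])
  have "(\<integral>\<^sup>+x. (\<integral>\<^sup>+z. h (x - z) \<partial>K) \<partial>lborel) = (\<integral>\<^sup>+z. (\<integral>\<^sup>+x. h (x - z) \<partial>lborel) \<partial>K)"
    using Fubini[OF meas] by simp
  also have "\<dots> = (\<integral>\<^sup>+z. (\<integral>\<^sup>+x. h x \<partial>lborel) \<partial>K)"
  proof (rule nn_integral_cong)
    fix z
    show "(\<integral>\<^sup>+x. h (x - z) \<partial>lborel) = (\<integral>\<^sup>+x. h x \<partial>lborel)"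
      using nn_integral_real_affine[OF h, of 1 "- z"] by simp
  qed
  also have "\<dots> = emeasure K UNIV * (\<integral>\<^sup>+x. h x \<partial>lborel)" by (simp add: spK mult.commute)
  finally show ?thesis .
qed

lemma conv_fun_props:
  fixes K :: "real measure" and f :: "real \<Rightarrow> real"
  assumes K: "finite_measure K" "sets K = sets borel" and f: "integrable lborel f"
  shows "AE x in lborel. integrable K (\<lambda>z. f (x - z))"
    and "integrable lborel (conv_fun K f)"
    and "(\<integral>x. \<bar>conv_fun K f x\<bar> \<partial>lborel) \<le> measure K UNIV * (\<integral>x. \<bar>f x\<bar> \<partial>lborel)"
proof -
  interpret K: finite_measure K by fact
  interpret pair_sigma_finite lborel K ..
  have spK: "space K = UNIV" using sets_eq_imp_space_eq[OF K(2)] by simp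
  have fm: "f \<in> borel_measurable borel" using f by auto
  have hm: "(\<lambda>x. ennreal (norm (f x))) \<in> borel_measurable borel" using fm by simp
  have fs: "(\<lambda>z. f (x - z)) \<in> borel_measurable K" for x
    by (subst measurable_cong_sets[OF K(2) refl]) (rule meas_shift[OF fm])
  have pm: "(\<lambda>p. ennreal (norm (f (fst p - snd p)))) \<in> borel_measurable (lborel \<Otimes>\<^sub>M K)"
    by (rule meas_prod_shift[OF K(2) hm])
  have im: "(\<lambda>x. \<integral>\<^sup>+z. ennreal (norm (f (x - z))) \<partial>K) \<in> borel_measurable lborel"
    using K.borel_measurable_nn_integral[of "\<lambda>x z. ennreal (norm (f (x - z)))" lborel] pm
    by (simp add: split_beta')
  have fin_f: "(\<integral>\<^sup>+x. ennreal (norm (f x)) \<partial>lborel) < \<infinity>" using f by (simp add: integrable_iff_bounded)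
  have eq: "(\<integral>\<^sup>+x. (\<integral>\<^sup>+z. ennreal (norm (f (x - z))) \<partial>K) \<partial>lborel) = emeasure K UNIV * (\<integral>\<^sup>+x. ennreal (norm (f x)) \<partial>lborel)"
    by (rule conv_nn[OF K hm])
  have fin: "(\<integral>\<^sup>+x. (\<integral>\<^sup>+z. ennreal (norm (f (x - z))) \<partial>K) \<partial>lborel) < \<infinity>"
  proof -
    have "emeasure K UNIV < \<infinity>" using K.emeasure_finite[of UNIV] by (simp add: less_top[symmetric])
    then show ?thesis unfolding eq using fin_f by (simp add: ennreal_mult_less_top)
  qed
  have "AE x in lborel. (\<integral>\<^sup>+z. ennreal (norm (f (x - z))) \<partial>K) \<noteq> \<infinity>"
    by (rule nn_integral_PInf_AE[OF im]) (use fin in simp)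
  then show ae: "AE x in lborel. integrable K (\<lambda>z. f (x - z))"
    by eventually_elim (auto simp: integrable_iff_bounded fs top.not_eq_extremum)
  have pm2: "(\<lambda>p. f (fst p - snd p)) \<in> borel_measurable (lborel \<Otimes>\<^sub>M K)"
    by (rule meas_prod_shift[OF K(2) fm])
  have cm: "conv_fun K f \<in> borel_measurable lborel"
    unfolding conv_fun_def
    using K.borel_measurable_lebesgue_integral[of "\<lambda>x z. f (x - z)" lborel] pm2 by (simp add: split_beta')
  have bnd: "ennreal (norm (conv_fun K f x)) \<le> (\<integral>\<^sup>+z. ennreal (norm (f (x - z))) \<partial>K)" for x
  proof (cases "integrable K (\<lambda>z. f (x - z))")
    case True
    then show ?thesis unfolding conv_fun_def by (rule integral_norm_bound_ennreal)
  qed (simp add: conv_fun_def not_integrable_integral_eq)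
  have le: "(\<integral>\<^sup>+x. ennreal (norm (conv_fun K f x)) \<partial>lborel) \<le> (\<integral>\<^sup>+x. (\<integral>\<^sup>+z. ennreal (norm (f (x - z))) \<partial>K) \<partial>lborel)"
    by (rule nn_integral_mono) (rule bnd)
  show ci: "integrable lborel (conv_fun K f)"
    unfolding integrable_iff_bounded using cm le fin by auto
  have "ennreal (\<integral>x. \<bar>conv_fun K f x\<bar> \<partial>lborel) = (\<integral>\<^sup>+x. ennreal (norm (conv_fun K f x)) \<partial>lborel)"
    using ci by (subst nn_integral_eq_integral) auto
  also have "\<dots> \<le> emeasure K UNIV * (\<integral>\<^sup>+x. ennreal (norm (f x)) \<partial>lborel)" using le eq by simp
  also have "\<dots> = ennreal (measure K UNIV) * ennreal (\<integral>x. \<bar>f x\<bar> \<partial>lborel)"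
    using f by (subst nn_integral_eq_integral) (auto simp: K.emeasure_eq_measure)
  also have "\<dots> = ennreal (measure K UNIV * (\<integral>x. \<bar>f x\<bar> \<partial>lborel))"
    by (simp add: ennreal_mult)
  finally show "(\<integral>x. \<bar>conv_fun K f x\<bar> \<partial>lborel) \<le> measure K UNIV * (\<integral>x. \<bar>f x\<bar> \<partial>lborel)"
    by (subst (asm) ennreal_le_iff) (auto intro!: mult_nonneg_nonneg)
qed

lemma conv_fun_ae_cong:
  fixes K :: "real measure" and f g :: "real \<Rightarrow> real"
  assumes K: "finite_measure K" "sets K = sets borel" and f: "integrable lborel f" and g: "integrable lborel g"
    and ae: "AE x in lborel. f x = g x"
  shows "AE x in lborel. conv_fun K f x = conv_fun K g x"
proof -
  interpret K: finite_measure K by fact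
  interpret pair_sigma_finite lborel K ..
  have fm: "f \<in> borel_measurable borel" using f by auto
  have gm: "g \<in> borel_measurable borel" using g by auto
  define h where "h x = ennreal \<bar>f x - g x\<bar>" for x
  have hm: "h \<in> borel_measurable borel" unfolding h_def using fm gm by simp
  have "(\<integral>\<^sup>+x. h x \<partial>lborel) = 0"
    using hm ae by (subst nn_integral_0_iff_AE) (auto simp: h_def)
  then have z: "(\<integral>\<^sup>+x. (\<integral>\<^sup>+z. h (x - z) \<partial>K) \<partial>lborel) = 0"
    using conv_nn[OF K hm] by simp
  have pm: "(\<lambda>p. h (fst p - snd p)) \<in> borel_measurable (lborel \<Otimes>\<^sub>M K)"
    by (rule meas_prod_shift[OF K(2) hm])
  have im: "(\<lambda>x. \<integral>\<^sup>+z. h (x - z) \<partial>K) \<in> borel_measurable lborel"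
    using K.borel_measurable_nn_integral[of "\<lambda>x z. h (x - z)" lborel] pm
    by (simp add: split_beta')
  have "AE x in lborel. (\<integral>\<^sup>+z. h (x - z) \<partial>K) = 0"
    using z im by (subst (asm) nn_integral_0_iff_AE) auto
  then show ?thesis
  proof eventually_elim
    case (elim x)
    have hs: "(\<lambda>z. h (x - z)) \<in> borel_measurable K"
      by (subst measurable_cong_sets[OF K(2) refl]) (rule meas_shift[OF hm])
    have "AE z in K. h (x - z) = 0" using elim hs by (subst (asm) nn_integral_0_iff_AE) auto
    then have "AE z in K. f (x - z) = g (x - z)" by eventually_elim (simp add: h_def)
    moreover have "(\<lambda>z. f (x - z)) \<in> borel_measurable K" "(\<lambda>z. g (x - z)) \<in> borel_measurable K"
      by (subst measurable_cong_sets[OF K(2) refl], rule meas_shift, simp add: fm gm)+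
    ultimately show ?case unfolding conv_fun_def by (intro integral_cong_AE) auto
  qed
qed

lemma conv_fun_lin:
  fixes K :: "real measure" and f g :: "real \<Rightarrow> real"
  assumes K: "finite_measure K" "sets K = sets borel" and f: "integrable lborel f" and g: "integrable lborel g"
  shows "AE x in lborel. conv_fun K (\<lambda>y. a * f y + b * g y) x = a * conv_fun K f x + b * conv_fun K g x"
  using conv_fun_props(1)[OF K f] conv_fun_props(1)[OF K g]
proof eventually_elim
  case (elim x)
  then show ?case by (simp add: conv_fun_def)
qed

lemma conv_fun_assoc:
  fixes M K :: "real measure" and f :: "real \<Rightarrow> real"
  assumes M: "finite_measure M" "sets M = sets borel" and K: "finite_measure K" "sets K = sets borel"
    and f: "integrable lborel f"
  shows "AE x in lborel. conv_fun M (conv_fun K f) x = conv_fun (M \<star> K) f x"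
proof -
  have MK: "finite_measure (M \<star> K)" "sets (M \<star> K) = sets borel"
    using convolution_finite[OF M(1) K(1) K(2) M(2)] by auto
  have fm: "f \<in> borel_measurable borel" using f by auto
  show ?thesis
    using conv_fun_props(1)[OF MK f]
  proof eventually_elim
    case (elim x)
    have "conv_fun (M \<star> K) f x = (\<integral>y. (\<integral>z. f (x - (y + z)) \<partial>K) \<partial>M)"
      unfolding conv_fun_def
      by (rule integral_convolution(2)[OF M K meas_shift[OF fm] elim])
    then show ?case by (simp add: conv_fun_def diff_diff_eq)
  qed
qed

lemma conv_fun_add_measure:
  fixes M N1 N2 :: "real measure" and f :: "real \<Rightarrow> real"
  assumes M: "finite_measure M" "sets M = sets borel" and s: "sets N1 = sets borel" "sets N2 = sets borel"
    and e: "\<And>A. A \<in> sets borel \<Longrightarrow> emeasure M A = emeasure N1 A + emeasure N2 A"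
    and f: "integrable lborel f"
  shows "AE x in lborel. conv_fun M f x = conv_fun N1 f x + conv_fun N2 f x"
  using conv_fun_props(1)[OF M f]
proof eventually_elim
  case (elim x)
  show ?case unfolding conv_fun_def
    by (rule measure_add_integral(3)) (use s M(2) e elim in auto)
qed

lemma conv_fun_return:
  fixes f :: "real \<Rightarrow> real"
  assumes f: "integrable lborel f"
  shows "conv_fun (return borel 0) f = f"
proof
  fix x
  have fm: "f \<in> borel_measurable borel" using f by auto
  show "conv_fun (return borel 0) f x = f x"
    unfolding conv_fun_def by (subst integral_return[OF _ meas_shift[OF fm]]) simp_all
qed


lemma ennreal_suminf_swap:
  fixes g :: "nat \<Rightarrow> nat \<Rightarrow> ennreal"
  shows "(\<Sum>k. \<Sum>n. g n k) = (\<Sum>n. \<Sum>k. g n k)"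
proof -
  have "(\<Sum>k. \<Sum>n. g n k) = (\<Sum>k. \<integral>\<^sup>+n. g n k \<partial>count_space UNIV)"
    by (simp add: nn_integral_count_space_nat)
  also have "\<dots> = (\<integral>\<^sup>+n. (\<Sum>k. g n k) \<partial>count_space UNIV)"
    by (rule nn_integral_suminf[symmetric]) simp
  also have "\<dots> = (\<Sum>n. \<Sum>k. g n k)"
    by (simp add: nn_integral_count_space_nat)
  finally show ?thesis .
qed

lemma ennreal_suminf_head:
  fixes g :: "nat \<Rightarrow> ennreal"
  shows "(\<Sum>n. g n) = g 0 + (\<Sum>n. g (Suc n))"
proof -
  have "(\<lambda>n. g (Suc n)) sums (\<Sum>n. g (Suc n))" by (rule summable_sums[OF summableI])
  then have "g sums ((\<Sum>n. g (Suc n)) + g 0)" by (rule sums_Suc)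
  then show ?thesis by (simp add: sums_unique[symmetric] add.commute)
qed

definition msum :: "(nat \<Rightarrow> ennreal) \<Rightarrow> (nat \<Rightarrow> real measure) \<Rightarrow> real measure" where
  "msum c M = measure_of UNIV (sets borel) (\<lambda>A. \<Sum>n. c n * emeasure (M n) A)"

lemma msum:
  assumes sM: "\<And>n. sets (M n) = sets borel"
  shows "sets (msum c M) = sets borel"
    and "A \<in> sets borel \<Longrightarrow> emeasure (msum c M) A = (\<Sum>n. c n * emeasure (M n) A)"
proof -
  show "sets (msum c M) = sets borel" unfolding msum_def using sets.sigma_sets_eq[of borel] by simp
  have sa: "sigma_algebra UNIV (sets borel)"
    using sets.sigma_algebra_axioms[of borel] by simp
  have pos: "positive (sets borel) (\<lambda>A. \<Sum>n. c n * emeasure (M n) A)"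
    unfolding positive_def by simp
  have cadd: "countably_additive (sets borel) (\<lambda>A. \<Sum>n. c n * emeasure (M n) A)"
    unfolding countably_additive_def
  proof (intro allI impI)
    fix A :: "nat \<Rightarrow> real set" assume A: "range A \<subseteq> sets borel" "disjoint_family A"
      "(\<Union>i. A i) \<in> sets borel"
    have "(\<Sum>k. \<Sum>n. c n * emeasure (M n) (A k)) = (\<Sum>n. \<Sum>k. c n * emeasure (M n) (A k))"
      by (rule ennreal_suminf_swap)
    also have "\<dots> = (\<Sum>n. c n * emeasure (M n) (\<Union>k. A k))"
      using A sM by (simp add: suminf_emeasure)
    finally show "(\<Sum>k. \<Sum>n. c n * emeasure (M n) (A k)) = (\<Sum>n. c n * emeasure (M n) (\<Union>k. A k))" .
  qed
  assume "A \<in> sets borel"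
  then show "emeasure (msum c M) A = (\<Sum>n. c n * emeasure (M n) A)"
    unfolding msum_def by (rule emeasure_measure_of_sigma[OF sa pos cadd])
qed

definition pw :: "real measure \<Rightarrow> nat \<Rightarrow> real measure" where
  "pw \<sigma> n = ((\<lambda>M. \<sigma> \<star> M) ^^ n) (return borel 0)"

lemma pw_0: "pw \<sigma> 0 = return borel 0" by (simp add: pw_def)
lemma pw_Suc: "pw \<sigma> (Suc n) = (\<sigma> \<star> pw \<sigma> n)" by (simp add: pw_def)

lemma pw_props:
  assumes \<sigma>: "finite_measure \<sigma>" "sets \<sigma> = sets borel"
  shows "sets (pw \<sigma> n) = sets borel \<and> finite_measure (pw \<sigma> n)"
proof (induction n)
  case 0
  have "prob_space (return borel (0::real))" by (rule prob_space_return) simp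
  then show ?case by (simp add: pw_0 prob_space_def)
next
  case (Suc n)
  then show ?case using convolution_finite[OF \<sigma>(1) _ _ \<sigma>(2)] by (simp add: pw_Suc)
qed

lemma pw_emeasure_Suc:
  assumes \<sigma>: "finite_measure \<sigma>" "sets \<sigma> = sets borel" and A: "A \<in> sets borel"
  shows "emeasure (pw \<sigma> (Suc n)) A = (\<integral>\<^sup>+y. emeasure (pw \<sigma> n) {x. x + y \<in> A} \<partial>\<sigma>)"
  unfolding pw_Suc
proof (rule convolution_emeasure)
  have "space (pw \<sigma> n) = UNIV" using sets_eq_imp_space_eq[of "pw \<sigma> n" borel] pw_props[OF \<sigma>, of n] by simp
  moreover have "space \<sigma> = UNIV" using sets_eq_imp_space_eq[OF \<sigma>(2)] by simp
  ultimately show "space \<sigma> = space (pw \<sigma> n)" "space (pw \<sigma> n) = space borel" by simp_all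
qed (use A \<sigma> pw_props[OF \<sigma>, of n] in auto)

lemma pw_UNIV:
  assumes \<sigma>: "finite_measure \<sigma>" "sets \<sigma> = sets borel"
  shows "emeasure (pw \<sigma> n) UNIV = ennreal (measure \<sigma> UNIV ^ n)"
proof (induction n)
  case 0
  then show ?case by (simp add: pw_0)
next
  case (Suc n)
  interpret finite_measure \<sigma> by fact
  have sp: "space \<sigma> = UNIV" using sets_eq_imp_space_eq[OF \<sigma>(2)] by simp
  have "emeasure (pw \<sigma> (Suc n)) UNIV = (\<integral>\<^sup>+y. ennreal (measure \<sigma> UNIV ^ n) \<partial>\<sigma>)"
    using pw_emeasure_Suc[OF \<sigma>, of UNIV n] Suc by simp
  also have "\<dots> = ennreal (measure \<sigma> UNIV ^ Suc n)"
    using sp by (simp add: emeasure_eq_measure ennreal_mult[symmetric] mult.commute)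
  finally show ?case .
qed

lemma emeasure_trans_meas:
  fixes P :: "real measure"
  assumes P: "finite_measure P" "sets P = sets borel" and A: "A \<in> sets borel"
  shows "(\<lambda>y. emeasure P {x. x + y \<in> A}) \<in> borel_measurable borel"
proof -
  interpret finite_measure P by fact
  have "(\<lambda>y. ennreal (measure P {x. x + y \<in> A})) \<in> borel_measurable borel"
    using measure_trans_meas[OF P A] by simp
  then show ?thesis by (simp add: emeasure_eq_measure)
qed


lemma conv_msum:
  fixes \<rho> \<sigma> :: "real measure" and f :: "nat \<Rightarrow> nat"
  assumes \<rho>: "finite_measure \<rho>" "sets \<rho> = sets borel" and \<sigma>: "finite_measure \<sigma>" "sets \<sigma> = sets borel"
    and a: "0 < a" and s: "s = measure \<sigma> UNIV" "s < a"
    and split: "\<forall>F\<in>borel_measurable borel. (\<integral>\<^sup>+y. F y \<partial>\<rho>) = F 0 * ennreal a + (\<integral>\<^sup>+y. F y \<partial>\<sigma>)"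
    and f: "\<And>n. n \<le> f n"
  shows "finite_measure (msum (\<lambda>n. ennreal ((1/a)^(Suc (f n)))) (\<lambda>n. pw \<sigma> (f n)))"
    "sets (msum (\<lambda>n. ennreal ((1/a)^(Suc (f n)))) (\<lambda>n. pw \<sigma> (f n))) = sets borel"
    "A \<in> sets borel \<Longrightarrow> emeasure (\<rho> \<star> msum (\<lambda>n. ennreal ((1/a)^(Suc (f n)))) (\<lambda>n. pw \<sigma> (f n))) A =
       (\<Sum>n. ennreal ((1/a)^(f n)) * emeasure (pw \<sigma> (f n)) A) +
       (\<Sum>n. ennreal ((1/a)^(Suc (f n))) * emeasure (pw \<sigma> (Suc (f n))) A)"
proof -
  define K where "K = msum (\<lambda>n. ennreal ((1/a)^(Suc (f n)))) (\<lambda>n. pw \<sigma> (f n))"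
  have sK: "sets K = sets borel" unfolding K_def by (rule msum(1)) (use pw_props[OF \<sigma>] in auto)
  have eK: "emeasure K A = (\<Sum>n. ennreal ((1/a)^(Suc (f n))) * emeasure (pw \<sigma> (f n)) A)" if "A \<in> sets borel" for A
    unfolding K_def by (rule msum(2)) (use pw_props[OF \<sigma>] that in auto)
  have s0: "0 \<le> s" using s(1) by simp
  have spK: "space K = UNIV" using sets_eq_imp_space_eq[OF sK] by simp
  have summ: "summable (\<lambda>n. (1/a)^(Suc (f n)) * s^(f n))"
  proof (rule summable_comparison_test')
    show "summable (\<lambda>n. (1/a) * (s/a)^n)"
    proof (intro summable_mult summable_geometric)
      show "norm (s / a) < 1" using a s(2) s0 by (simp add: abs_of_nonneg divide_less_eq_1_pos)
    qed
    fix n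
    have "(1/a)^(Suc (f n)) * s^(f n) = (1/a) * (s/a)^(f n)"
      by (simp add: power_divide field_simps)
    also have "\<dots> \<le> (1/a) * (s/a)^n"
    proof (rule mult_left_mono)
      have q0: "0 \<le> s / a" using a s0 by simp
      have q1: "s / a \<le> 1" using a s(2) by simp
      show "(s/a)^(f n) \<le> (s/a)^n" by (rule power_decreasing[OF f q0 q1])
      show "0 \<le> 1 / a" using a by simp
    qed
    finally show "norm ((1/a)^(Suc (f n)) * s^(f n)) \<le> (1/a) * (s/a)^n"
      using a s0 by simp
  qed
  have eU: "emeasure K UNIV = (\<Sum>n. ennreal ((1/a)^(Suc (f n))) * emeasure (pw \<sigma> (f n)) UNIV)"
    by (rule eK) simp
  have "emeasure K (space K) = (\<Sum>n. ennreal ((1/a)^(Suc (f n)) * s^(f n)))"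
    unfolding spK eU
  proof (rule suminf_cong)
    fix n
    have nn1: "0 \<le> (1/a)^Suc (f n)" using a by simp
    have nn2: "0 \<le> s^(f n)" using s0 by simp
    have e1: "emeasure (pw \<sigma> (f n)) UNIV = ennreal (s^(f n))" using pw_UNIV[OF \<sigma>, of "f n"] s(1) by simp
    show "ennreal ((1/a)^Suc (f n)) * emeasure (pw \<sigma> (f n)) UNIV = ennreal ((1/a)^Suc (f n) * s^(f n))"
      unfolding e1 by (rule ennreal_mult[symmetric, OF nn1 nn2])
  qed
  also have "\<dots> \<noteq> \<infinity>"
  proof -
    have "\<And>n. 0 \<le> (1/a)^(Suc (f n)) * s^(f n)" using a s0 by simp
    from ennreal_suminf_neq_top[OF summ this] show ?thesis by simp
  qed
  finally have finK: "finite_measure K" by (rule finite_measureI)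
  show "finite_measure (msum (\<lambda>n. ennreal ((1/a)^(Suc (f n)))) (\<lambda>n. pw \<sigma> (f n)))"
    using finK unfolding K_def .
  show "sets (msum (\<lambda>n. ennreal ((1/a)^(Suc (f n)))) (\<lambda>n. pw \<sigma> (f n))) = sets borel"
    using sK unfolding K_def .
  assume A: "A \<in> sets borel"
  define F where "F y = emeasure K {x. x + y \<in> A}" for y
  have Fm: "F \<in> borel_measurable borel" unfolding F_def by (rule emeasure_trans_meas[OF finK sK A])
  have Fe: "F y = (\<Sum>n. ennreal ((1/a)^(Suc (f n))) * emeasure (pw \<sigma> (f n)) {x. x + y \<in> A})" for y
    unfolding F_def by (rule eK[OF trans_set_borel[OF A]])
  have spr: "space \<rho> = UNIV" using sets_eq_imp_space_eq[OF \<rho>(2)] by simp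
  have "emeasure (\<rho> \<star> K) A = (\<integral>\<^sup>+y. F y \<partial>\<rho>)"
    unfolding F_def by (rule convolution_emeasure) (use A \<rho> finK sK spr spK in auto)
  also have "\<dots> = F 0 * ennreal a + (\<integral>\<^sup>+y. F y \<partial>\<sigma>)" using split Fm by blast
  also have "F 0 * ennreal a = (\<Sum>n. ennreal ((1/a)^(f n)) * emeasure (pw \<sigma> (f n)) A)"
  proof -
    have "F 0 * ennreal a = (\<Sum>n. ennreal ((1/a)^(Suc (f n))) * ennreal a * emeasure (pw \<sigma> (f n)) A)"
      unfolding Fe by (simp add: ac_simps)
    also have "\<dots> = (\<Sum>n. ennreal ((1/a)^(f n)) * emeasure (pw \<sigma> (f n)) A)"
    proof (rule suminf_cong)
      fix n
      have "ennreal ((1/a)^(Suc (f n))) * ennreal a = ennreal ((1/a)^(f n))"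
        using a by (simp add: ennreal_mult[symmetric] field_simps)
      then show "ennreal ((1/a)^(Suc (f n))) * ennreal a * emeasure (pw \<sigma> (f n)) A =
          ennreal ((1/a)^(f n)) * emeasure (pw \<sigma> (f n)) A" by simp
    qed
    finally show ?thesis .
  qed
  also have "(\<integral>\<^sup>+y. F y \<partial>\<sigma>) = (\<Sum>n. ennreal ((1/a)^(Suc (f n))) * emeasure (pw \<sigma> (Suc (f n))) A)"
  proof -
    have pm: "(\<lambda>y. emeasure (pw \<sigma> k) {x. x + y \<in> A}) \<in> borel_measurable \<sigma>" for k
      by (subst measurable_cong_sets[OF \<sigma>(2) refl])
         (rule emeasure_trans_meas[OF _ _ A], use pw_props[OF \<sigma>, of k] in auto)
    have "(\<integral>\<^sup>+y. F y \<partial>\<sigma>) = (\<Sum>n. \<integral>\<^sup>+y. ennreal ((1/a)^(Suc (f n))) * emeasure (pw \<sigma> (f n)) {x. x + y \<in> A} \<partial>\<sigma>)"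
      unfolding Fe by (rule nn_integral_suminf) (use pm in auto)
    also have "\<dots> = (\<Sum>n. ennreal ((1/a)^(Suc (f n))) * (\<integral>\<^sup>+y. emeasure (pw \<sigma> (f n)) {x. x + y \<in> A} \<partial>\<sigma>))"
      using pm by (simp add: nn_integral_cmult)
    also have "\<dots> = (\<Sum>n. ennreal ((1/a)^(Suc (f n))) * emeasure (pw \<sigma> (Suc (f n))) A)"
      using pw_emeasure_Suc[OF \<sigma> A] by simp
    finally show ?thesis .
  qed
  finally show "emeasure (\<rho> \<star> msum (\<lambda>n. ennreal ((1/a)^(Suc (f n)))) (\<lambda>n. pw \<sigma> (f n))) A =
       (\<Sum>n. ennreal ((1/a)^(f n)) * emeasure (pw \<sigma> (f n)) A) +
       (\<Sum>n. ennreal ((1/a)^(Suc (f n))) * emeasure (pw \<sigma> (Suc (f n))) A)"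
    unfolding K_def .
qed


lemma inverse_kernels:
  fixes \<rho> :: "real measure"
  assumes \<rho>: "finite_measure \<rho>" "sets \<rho> = sets borel" and m: "measure \<rho> UNIV < 2 * measure \<rho> {0}"
  shows "\<exists>Kp Km. finite_measure Kp \<and> sets Kp = sets borel \<and> finite_measure Km \<and> sets Km = sets borel \<and>
     (\<forall>A\<in>sets borel. emeasure (\<rho> \<star> Kp) A = emeasure (return borel 0) A + emeasure (\<rho> \<star> Km) A)"
proof -
  interpret R: finite_measure \<rho> by fact
  define a where "a = measure \<rho> {0}"
  have a: "0 < a" using m measure_nonneg[of \<rho> UNIV] unfolding a_def by linarith
  have spr: "space \<rho> = UNIV" using sets_eq_imp_space_eq[OF \<rho>(2)] by simp
  have z: "{0::real} \<in> sets \<rho>" "UNIV - {0::real} \<in> sets \<rho>" using \<rho>(2) by auto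
  define \<sigma> where "\<sigma> = density \<rho> (indicator (UNIV - {0}) :: real \<Rightarrow> ennreal)"
  have s\<sigma>: "sets \<sigma> = sets borel" unfolding \<sigma>_def using \<rho>(2) by simp
  have im: "(indicator (UNIV - {0}) :: real \<Rightarrow> ennreal) \<in> borel_measurable \<rho>"
    using z by simp
  have e\<sigma>: "emeasure \<sigma> A = emeasure \<rho> (A - {0})" if A: "A \<in> sets borel" for A
  proof -
    have "emeasure \<sigma> A = (\<integral>\<^sup>+x. indicator (UNIV - {0}) x * indicator A x \<partial>\<rho>)"
      unfolding \<sigma>_def by (rule emeasure_density[OF im]) (use A \<rho>(2) in simp)
    also have "\<dots> = (\<integral>\<^sup>+x. indicator (A - {0}) x \<partial>\<rho>)"
      by (intro nn_integral_cong) (auto split: split_indicator)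
    also have "\<dots> = emeasure \<rho> (A - {0})" using A \<rho>(2) by simp
    finally show ?thesis .
  qed
  have sp\<sigma>: "space \<sigma> = UNIV" unfolding \<sigma>_def using spr by simp
  have fin\<sigma>: "finite_measure \<sigma>"
    by (rule finite_measureI) (use e\<sigma>[of UNIV] sp\<sigma> R.emeasure_finite in auto)
  define s where "s = measure \<sigma> UNIV"
  have "s = measure \<rho> (UNIV - {0})" unfolding s_def measure_def using e\<sigma>[of UNIV] by simp
  also have "\<dots> = measure \<rho> UNIV - a" unfolding a_def using z spr sets.top[of \<rho>]
    by (subst R.finite_measure_Diff) auto
  finally have s: "s < a" using m unfolding a_def by linarith
  have split: "\<forall>F\<in>borel_measurable borel. (\<integral>\<^sup>+y. F y \<partial>\<rho>) = F 0 * ennreal a + (\<integral>\<^sup>+y. F y \<partial>\<sigma>)"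
  proof
    fix F :: "real \<Rightarrow> ennreal" assume F: "F \<in> borel_measurable borel"
    have Fr: "F \<in> borel_measurable \<rho>" by (subst measurable_cong_sets[OF \<rho>(2) refl]) (rule F)
    have "(\<integral>\<^sup>+y. F y \<partial>\<rho>) = (\<integral>\<^sup>+y. F 0 * indicator {0} y + indicator (UNIV - {0}) y * F y \<partial>\<rho>)"
      by (intro nn_integral_cong) (auto split: split_indicator)
    also have "\<dots> = (\<integral>\<^sup>+y. F 0 * indicator {0} y \<partial>\<rho>) + (\<integral>\<^sup>+y. indicator (UNIV - {0}) y * F y \<partial>\<rho>)"
      by (rule nn_integral_add) (use z Fr im in auto)
    also have "(\<integral>\<^sup>+y. F 0 * indicator {0} y \<partial>\<rho>) = F 0 * ennreal a"
      using z unfolding a_def by (simp add: nn_integral_cmult_indicator R.emeasure_eq_measure)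
    also have "(\<integral>\<^sup>+y. indicator (UNIV - {0}) y * F y \<partial>\<rho>) = (\<integral>\<^sup>+y. F y \<partial>\<sigma>)"
      unfolding \<sigma>_def by (rule nn_integral_density[symmetric, OF im Fr])
    finally show "(\<integral>\<^sup>+y. F y \<partial>\<rho>) = F 0 * ennreal a + (\<integral>\<^sup>+y. F y \<partial>\<sigma>)" .
  qed
  define t where "t A k = ennreal ((1/a)^k) * emeasure (pw \<sigma> k) A" for A k
  define Kp where "Kp = msum (\<lambda>n. ennreal ((1/a)^(Suc (2*n)))) (\<lambda>n. pw \<sigma> (2*n))"
  define Km where "Km = msum (\<lambda>n. ennreal ((1/a)^(Suc (Suc (2*n))))) (\<lambda>n. pw \<sigma> (Suc (2*n)))"
  have f1: "\<And>n::nat. n \<le> 2 * n" by simp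
  have f2: "\<And>n::nat. n \<le> Suc (2 * n)" by simp
  note cp = conv_msum[where f="\<lambda>n. 2 * n", OF \<rho> fin\<sigma> s\<sigma> a s_def s split f1, folded Kp_def]
  note cm = conv_msum[where f="\<lambda>n. Suc (2 * n)", OF \<rho> fin\<sigma> s\<sigma> a s_def s split f2, folded Km_def]
  have "emeasure (\<rho> \<star> Kp) A = emeasure (return borel 0) A + emeasure (\<rho> \<star> Km) A" if A: "A \<in> sets borel" for A
  proof -
    have E1: "emeasure (\<rho> \<star> Kp) A = (\<Sum>n. t A (2*n)) + (\<Sum>n. t A (Suc (2*n)))"
      using cp(3)[OF A] unfolding t_def by simp
    have E2: "emeasure (\<rho> \<star> Km) A = (\<Sum>n. t A (Suc (2*n))) + (\<Sum>n. t A (Suc (Suc (2*n))))"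
      using cm(3)[OF A] unfolding t_def by simp
    have H: "(\<Sum>n. t A (2*n)) = t A 0 + (\<Sum>n. t A (Suc (Suc (2*n))))"
      using ennreal_suminf_head[of "\<lambda>n. t A (2*n)"] by simp
    have T0: "t A 0 = emeasure (return borel 0) A" unfolding t_def by (simp add: pw_0)
    show ?thesis unfolding E1 E2 H T0 by (simp add: ac_simps)
  qed
  then show ?thesis using cp(1,2) cm(1,2) by blast
qed


lemma sm_minus: "signed_measure X \<Longrightarrow> signed_measure Y \<Longrightarrow> signed_measure (\<lambda>A. X A - Y A)"
  using sm_lin[of X Y 1 "-1"] by simp

lemma conv_sm_minus:
  fixes K :: "real measure"
  assumes K: "finite_measure K" "sets K = sets borel" and sm: "signed_measure X" "signed_measure Y"
  shows "conv_sm K (\<lambda>A. X A - Y A) = (\<lambda>A. conv_sm K X A - conv_sm K Y A)"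
  using conv_sm_lin[OF K sm, of 1 "-1"] by simp

lemma tv_minus:
  assumes "signed_measure X" "signed_measure Y"
  shows "tv_norm (\<lambda>A. X A - Y A) \<le> tv_norm X + tv_norm Y"
  using tv_lin[OF assms, of 1 "-1"] by simp

lemma conv_fun_minus:
  fixes K :: "real measure" and f g :: "real \<Rightarrow> real"
  assumes K: "finite_measure K" "sets K = sets borel" and f: "integrable lborel f" and g: "integrable lborel g"
  shows "AE x in lborel. conv_fun K (\<lambda>y. f y - g y) x = conv_fun K f x - conv_fun K g x"
  using conv_fun_lin[OF K f g, of 1 "-1"] by simp

lemma measure_conv_UNIV:
  fixes M P :: "real measure"
  assumes M: "finite_measure M" "sets M = sets borel" and P: "prob_space P" "sets P = sets borel"
  shows "measure (M \<star> P) UNIV = measure M UNIV"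
proof -
  interpret P: prob_space P by fact
  have fP: "finite_measure P" by (rule P.finite_measure_axioms)
  have "measure (M \<star> P) UNIV = (\<integral>y. measure P {x. x + y \<in> UNIV} \<partial>M)"
    by (rule measure_conv[OF M fP P(2)]) simp
  also have "\<dots> = measure M UNIV"
  proof -
    have "measure P UNIV = 1" using P.prob_space sets_eq_imp_space_eq[OF P(2)] by simp
    then show ?thesis using sets_eq_imp_space_eq[OF M(2)] by simp
  qed
  finally show ?thesis .
qed

theorem theorem4:
  fixes \<eta> \<mu>\<^sub>\<epsilon> :: "real measure"
  assumes "prob_space \<mu>\<^sub>\<epsilon>" and "sets \<mu>\<^sub>\<epsilon> = sets borel"
    and "finite_measure \<eta>" and "sets \<eta> = sets borel"
    and "measure \<eta> UNIV < 2 * min (measure (\<eta> \<star> \<mu>\<^sub>\<epsilon>) {0}) 1"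
  shows "sm_invertible (conv_sm (\<eta> \<star> \<mu>\<^sub>\<epsilon>))
     \<and> L1_invertible (conv_fun (\<eta> \<star> \<mu>\<^sub>\<epsilon>))"
proof -
  define \<rho> where "\<rho> = (\<eta> \<star> \<mu>\<^sub>\<epsilon>)"
  have f\<mu>: "finite_measure \<mu>\<^sub>\<epsilon>" using assms(1) by (simp add: prob_space_def)
  have \<rho>: "finite_measure \<rho>" "sets \<rho> = sets borel"
    unfolding \<rho>_def using convolution_finite[OF assms(3) f\<mu> assms(2) assms(4)] by auto
  have m: "measure \<rho> UNIV < 2 * measure \<rho> {0}"
    using assms(5) measure_conv_UNIV[OF assms(3,4,1,2)] unfolding \<rho>_def by linarith
  obtain Kp Km where KK: "finite_measure Kp" "sets Kp = sets borel" "finite_measure Km" "sets Km = sets borel"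
     and eq: "\<And>A. A \<in> sets borel \<Longrightarrow> emeasure (\<rho> \<star> Kp) A = emeasure (return borel 0) A + emeasure (\<rho> \<star> Km) A"
    using inverse_kernels[OF \<rho> m] by blast
  have Kp: "finite_measure Kp" "sets Kp = sets borel" using KK by auto
  have Km: "finite_measure Km" "sets Km = sets borel" using KK by auto
  have cp: "(Kp \<star> \<rho>) = (\<rho> \<star> Kp)" by (rule convolution_commutative[OF Kp(1) \<rho>(1) \<rho>(2) Kp(2)])
  have cm: "(Km \<star> \<rho>) = (\<rho> \<star> Km)" by (rule convolution_commutative[OF Km(1) \<rho>(1) \<rho>(2) Km(2)])
  have \<rho>Kp: "finite_measure (\<rho> \<star> Kp)" "sets (\<rho> \<star> Kp) = sets borel"
    using convolution_finite[OF \<rho>(1) Kp(1) Kp(2) \<rho>(2)] by auto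
  have sret: "sets (return borel (0::real)) = sets borel" by simp
  have s\<rho>Km: "sets (\<rho> \<star> Km) = sets borel" by simp
  have SM: "sm_invertible (conv_sm \<rho>)"
    unfolding sm_invertible_def
  proof (intro conjI allI impI)
    show "signed_measure (conv_sm \<rho> \<nu>)" if "signed_measure \<nu>" for \<nu>
      by (rule conv_sm_signed[OF \<rho> that])
    have key: "(\<lambda>A. conv_sm (\<rho> \<star> Kp) \<nu> A - conv_sm (\<rho> \<star> Km) \<nu> A) = \<nu>" if sm: "signed_measure \<nu>" for \<nu>
    proof
      fix A
      have "conv_sm (\<rho> \<star> Kp) \<nu> A = conv_sm (return borel 0) \<nu> A + conv_sm (\<rho> \<star> Km) \<nu> A"
        by (rule conv_sm_add_measure[OF \<rho>Kp sret s\<rho>Km eq sm])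
      then show "conv_sm (\<rho> \<star> Kp) \<nu> A - conv_sm (\<rho> \<star> Km) \<nu> A = \<nu> A"
        using conv_sm_return[OF sm] by simp
    qed
    show "\<exists>S. (\<forall>\<nu>. signed_measure \<nu> \<longrightarrow> signed_measure (S \<nu>) \<and> conv_sm \<rho> (S \<nu>) = \<nu> \<and> S (conv_sm \<rho> \<nu>) = \<nu>) \<and>
          (\<forall>\<nu> \<mu> a b. signed_measure \<nu> \<longrightarrow> signed_measure \<mu> \<longrightarrow>
               S (\<lambda>A. a * \<nu> A + b * \<mu> A) = (\<lambda>A. a * S \<nu> A + b * S \<mu> A)) \<and>
          (\<exists>C. \<forall>\<nu>. signed_measure \<nu> \<longrightarrow> tv_norm (S \<nu>) \<le> C * tv_norm \<nu>)"
    proof (intro exI[where x="\<lambda>\<nu> A. conv_sm Kp \<nu> A - conv_sm Km \<nu> A"] conjI allI impI)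
      fix \<nu> assume sm: "signed_measure \<nu>"
      show "signed_measure (\<lambda>A. conv_sm Kp \<nu> A - conv_sm Km \<nu> A)"
        by (rule sm_minus[OF conv_sm_signed[OF Kp sm] conv_sm_signed[OF Km sm]])
      show "conv_sm \<rho> (\<lambda>A. conv_sm Kp \<nu> A - conv_sm Km \<nu> A) = \<nu>"
        using conv_sm_minus[OF \<rho> conv_sm_signed[OF Kp sm] conv_sm_signed[OF Km sm]]
          conv_sm_assoc[OF \<rho> Kp sm] conv_sm_assoc[OF \<rho> Km sm] key[OF sm] by simp
      show "(\<lambda>A. conv_sm Kp (conv_sm \<rho> \<nu>) A - conv_sm Km (conv_sm \<rho> \<nu>) A) = \<nu>"
        using conv_sm_assoc[OF Kp \<rho> sm] conv_sm_assoc[OF Km \<rho> sm] cp cm key[OF sm] by simp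
    next
      fix \<nu> \<mu> :: "real set \<Rightarrow> real" and a b :: real
      assume sm: "signed_measure \<nu>" "signed_measure \<mu>"
      show "(\<lambda>A. conv_sm Kp (\<lambda>A. a * \<nu> A + b * \<mu> A) A - conv_sm Km (\<lambda>A. a * \<nu> A + b * \<mu> A) A) =
          (\<lambda>A. a * (conv_sm Kp \<nu> A - conv_sm Km \<nu> A) + b * (conv_sm Kp \<mu> A - conv_sm Km \<mu> A))"
        using conv_sm_lin[OF Kp sm, of a b] conv_sm_lin[OF Km sm, of a b] by (simp add: algebra_simps)
    next
      show "\<exists>C. \<forall>\<nu>. signed_measure \<nu> \<longrightarrow> tv_norm (\<lambda>A. conv_sm Kp \<nu> A - conv_sm Km \<nu> A) \<le> C * tv_norm \<nu>"
      proof (intro exI[where x="measure Kp UNIV + measure Km UNIV"] allI impI)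
        fix \<nu> assume sm: "signed_measure \<nu>"
        have "tv_norm (\<lambda>A. conv_sm Kp \<nu> A - conv_sm Km \<nu> A) \<le> tv_norm (conv_sm Kp \<nu>) + tv_norm (conv_sm Km \<nu>)"
          by (rule tv_minus[OF conv_sm_signed[OF Kp sm] conv_sm_signed[OF Km sm]])
        also have "\<dots> \<le> measure Kp UNIV * tv_norm \<nu> + measure Km UNIV * tv_norm \<nu>"
          by (intro add_mono conv_sm_tv[OF Kp sm] conv_sm_tv[OF Km sm])
        finally show "tv_norm (\<lambda>A. conv_sm Kp \<nu> A - conv_sm Km \<nu> A) \<le> (measure Kp UNIV + measure Km UNIV) * tv_norm \<nu>"
          by (simp add: distrib_right)
      qed
    qed
  qed
  have L1: "L1_invertible (conv_fun \<rho>)"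
    unfolding L1_invertible_def
  proof (intro conjI allI impI)
    fix f g :: "real \<Rightarrow> real"
    assume f: "integrable lborel f" and g: "integrable lborel g" and ae: "AE x in lborel. f x = g x"
    show "integrable lborel (conv_fun \<rho> f)" by (rule conv_fun_props(2)[OF \<rho> f])
    show "AE x in lborel. conv_fun \<rho> f x = conv_fun \<rho> g x" by (rule conv_fun_ae_cong[OF \<rho> f g ae])
  next
    have key: "AE x in lborel. conv_fun (\<rho> \<star> Kp) f x - conv_fun (\<rho> \<star> Km) f x = f x"
      if f: "integrable lborel f" for f
    proof -
      have "AE x in lborel. conv_fun (\<rho> \<star> Kp) f x = conv_fun (return borel 0) f x + conv_fun (\<rho> \<star> Km) f x"
        by (rule conv_fun_add_measure[OF \<rho>Kp sret s\<rho>Km _ f]) (simp add: eq)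
      then show ?thesis by eventually_elim (simp add: conv_fun_return[OF f])
    qed
    show "\<exists>S. (\<forall>f g. integrable lborel f \<longrightarrow> integrable lborel g \<longrightarrow> (AE x in lborel. f x = g x) \<longrightarrow>
             integrable lborel (S f) \<and> (AE x in lborel. S f x = S g x)) \<and>
          (\<forall>f. integrable lborel f \<longrightarrow>
             (AE x in lborel. conv_fun \<rho> (S f) x = f x) \<and> (AE x in lborel. S (conv_fun \<rho> f) x = f x)) \<and>
          (\<forall>f g a b. integrable lborel f \<longrightarrow> integrable lborel g \<longrightarrow>
             (AE x in lborel. S (\<lambda>y. a * f y + b * g y) x = a * S f x + b * S g x)) \<and>
          (\<exists>C. \<forall>f. integrable lborel f \<longrightarrow>
             (\<integral>x. \<bar>S f x\<bar> \<partial>lborel) \<le> C * (\<integral>x. \<bar>f x\<bar> \<partial>lborel))"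
    proof (intro exI[where x="\<lambda>f x. conv_fun Kp f x - conv_fun Km f x"] conjI allI impI)
      fix f g :: "real \<Rightarrow> real"
      assume f: "integrable lborel f" and g: "integrable lborel g" and ae: "AE x in lborel. f x = g x"
      show "integrable lborel (\<lambda>x. conv_fun Kp f x - conv_fun Km f x)"
        using conv_fun_props(2)[OF Kp f] conv_fun_props(2)[OF Km f] by auto
      show "AE x in lborel. conv_fun Kp f x - conv_fun Km f x = conv_fun Kp g x - conv_fun Km g x"
        using conv_fun_ae_cong[OF Kp f g ae] conv_fun_ae_cong[OF Km f g ae] by eventually_elim simp
    next
      fix f :: "real \<Rightarrow> real" assume f: "integrable lborel f"
      have ip: "integrable lborel (conv_fun Kp f)" by (rule conv_fun_props(2)[OF Kp f])
      have im: "integrable lborel (conv_fun Km f)" by (rule conv_fun_props(2)[OF Km f])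
      show "AE x in lborel. conv_fun \<rho> (\<lambda>x. conv_fun Kp f x - conv_fun Km f x) x = f x"
        using conv_fun_minus[OF \<rho> ip im] conv_fun_assoc[OF \<rho> Kp f] conv_fun_assoc[OF \<rho> Km f] key[OF f]
        by eventually_elim simp
      have ir: "integrable lborel (conv_fun \<rho> f)" by (rule conv_fun_props(2)[OF \<rho> f])
      show "AE x in lborel. conv_fun Kp (conv_fun \<rho> f) x - conv_fun Km (conv_fun \<rho> f) x = f x"
        using conv_fun_assoc[OF Kp \<rho> f] conv_fun_assoc[OF Km \<rho> f] key[OF f]
        by eventually_elim (simp add: cp cm)
    next
      fix f g :: "real \<Rightarrow> real" and a b :: real
      assume f: "integrable lborel f" and g: "integrable lborel g"
      show "AE x in lborel. conv_fun Kp (\<lambda>y. a * f y + b * g y) x - conv_fun Km (\<lambda>y. a * f y + b * g y) x =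
          a * (conv_fun Kp f x - conv_fun Km f x) + b * (conv_fun Kp g x - conv_fun Km g x)"
        using conv_fun_lin[OF Kp f g, of a b] conv_fun_lin[OF Km f g, of a b]
        by eventually_elim (simp add: algebra_simps)
    next
      show "\<exists>C. \<forall>f. integrable lborel f \<longrightarrow>
             (\<integral>x. \<bar>conv_fun Kp f x - conv_fun Km f x\<bar> \<partial>lborel) \<le> C * (\<integral>x. \<bar>f x\<bar> \<partial>lborel)"
      proof (intro exI[where x="measure Kp UNIV + measure Km UNIV"] allI impI)
        fix f :: "real \<Rightarrow> real" assume f: "integrable lborel f"
        have ip: "integrable lborel (conv_fun Kp f)" by (rule conv_fun_props(2)[OF Kp f])
        have im: "integrable lborel (conv_fun Km f)" by (rule conv_fun_props(2)[OF Km f])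
        have "(\<integral>x. \<bar>conv_fun Kp f x - conv_fun Km f x\<bar> \<partial>lborel) \<le> (\<integral>x. \<bar>conv_fun Kp f x\<bar> + \<bar>conv_fun Km f x\<bar> \<partial>lborel)"
          using ip im by (intro integral_mono) auto
        also have "\<dots> = (\<integral>x. \<bar>conv_fun Kp f x\<bar> \<partial>lborel) + (\<integral>x. \<bar>conv_fun Km f x\<bar> \<partial>lborel)"
          using ip im by (intro Bochner_Integration.integral_add) auto
        also have "\<dots> \<le> measure Kp UNIV * (\<integral>x. \<bar>f x\<bar> \<partial>lborel) + measure Km UNIV * (\<integral>x. \<bar>f x\<bar> \<partial>lborel)"
          by (intro add_mono conv_fun_props(3)[OF Kp f] conv_fun_props(3)[OF Km f])
        finally show "(\<integral>x. \<bar>conv_fun Kp f x - conv_fun Km f x\<bar> \<partial>lborel) \<le> (measure Kp UNIV + measure Km UNIV) * (\<integral>x. \<bar>f x\<bar> \<partial>lborel)"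
          by (simp add: distrib_right)
      qed
    qed
  qed
  show ?thesis using SM L1 unfolding \<rho>_def by simp
qed


end
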